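(* In the quantum switch model of the context (with $W=\infty$), suppose $(\lambda_{ij}+\epsilon)_{i,j\in\mathcal K}\in\Lambda$ for some $\epsilon>0$, that Assumption 1 holds, and that an on-demand protocol is used. Let $S(t)$ be the event $\big\{\sum_{i\in\mathcal K}U_{ij}(t)\le E_{0j}(t)\ \forall j\in\mathcal K\big\}$ and $\overline S(t)$ its complement. Then there exists a constant $c_2$, independent of $t$, such that for all $t\ge1$ and all $i,j\in\mathcal K$, $$\mathbb E\Big[\sum_{\tau=0}^{t-1}A_{ij}(\tau)\,\Big|\,\overline S(t)\Big]\mathbb P[\overline S(t)]\le c_2 .$$
   Context: Quantum switch model. There are $K$ end nodes $\mathcal K=\{1,\dots,K\}$ and a switch (node $0$); time is slotted, $t=0,1,2,\dots$; pair-indexed quantities are symmetric in $(i,j)$. In slot $t$: (i) $C_{0i}(t)\in\{0,1\}$ EPR pairs are generated between the switch and node $i$, where $\{C_{0i}(t)\}_{t\ge0}$ are mutually independent Bernoulli processes (i.i.d. in $t$) with mean $p_i$. (ii) The switch chooses nonnegative integers $F_{ij}(t)=F_{ji}(t)$ (entanglement swaps for pair $(i,j)$, each consuming one stored switch–$i$ and one stored switch–$j$ pair) with $\sum_iF_{ij}(t)\le E_{0j}(t)$; no limit on swaps per slot ($W=\infty$); each swap succeeds independently with probability $q\in(0,1]$; $R_{ij}(t)$ is the number of successes. (iii) $A_{ij}(t)\in\mathbb N$ new requests for pair $(i,j)$ arrive. Dynamics: $U_{ij}(t+1)=[U_{ij}(t)-E_{ij}(t)-R_{ij}(t)]^++A_{ij}(t)$,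 $E_{ij}(t+1)=[E_{ij}(t)+R_{ij}(t)-U_{ij}(t)]^+$, $E_{0i}(t+1)=E_{0i}(t)-\sum_jF_{ij}(t)+C_{0i}(t)$, with zero initial values; $U_{ij}$ = pending requests, $E_{ij}$ = stored $i$–$j$ pairs, $E_{0i}$ = stored switch–$i$ pairs; memory unlimited, no decoherence. Requests: $\{A_{ij}(t)\}_t$ mutually independent across pairs, each stationary ergodic with rate $\lambda_{ij}$, and $\mathbb E[A_{ij}(t)^2\mid H(t)=h]\le A_{\max}^2$ for every $t,i,j$ and realization $h$ of the history $H(t)=(E_{ij}(\tau),U_{ij}(\tau),A_{ij}(\tau),R_{ij}(\tau),C_{0i}(\tau))_{\tau=0}^{t-1}$. $\Lambda$ is the set of nonnegative matrices $(\lambda_{ij})$ for which there exist nonnegative $f_{ij}=f_{ji}$ with $\sum_if_{ij}\le p_j$ for all $j$ and $\lambda_{ij}\le qf_{ij}$ for all $i,j$. Assumption 1: for every $\epsilon'>0$ there is a constant $c_1(\epsilon')$, independent of $t$, such that for all $t\ge1$ and all $i,j$, $\mathbb E\big[\sum_{\tau=0}^{t-1}A_{ij}(\tau)\,\big|\,B_1\big]\mathbb P[B_1]\le c_1(\epsilon')$, where $B_1$ is the event that $\big|\frac1t\sum_{\tau=0}^{t-1}A_{i'j'}(\tau)-\lambda_{i'j'}\big|>\epsilon'$ for some $i',j'$. On-demand protocols: in every slot $t$ the choices $F_{ij}=F_{ij}(t)$ satisfy $\sum_{i}F_{ij}\le E_{0j}(t)$ for all $j$; $F_{ij}\le U_{ij}(t)$;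 $F_{ij}=F_{ji}\in\mathbb N$; and $\big(E_{0i}(t)-\sum_kF_{ik}\big)\big(E_{0j}(t)-\sum_kF_{kj}\big)\big(U_{ij}(t)-F_{ij}\big)=0$ for all $i,j$. *)

theory Defs
  imports "HOL-Probability.Probability"
begin

text \<open>Quantum switch model. Nodes are 1..K. Pair-indexed processes are functions
  X i j t omega (slot t, outcome omega); node-indexed ones are C i t omega.\<close>

type_synonym 'a pproc = "nat \<Rightarrow> nat \<Rightarrow> nat \<Rightarrow> 'a \<Rightarrow> nat"

text \<open>Joint recursion for (U_ij(t), E_ij(t)); natural-number subtraction is the positive part.\<close>
primrec UE :: "'a pproc \<Rightarrow> 'a pproc \<Rightarrow> nat \<Rightarrow> nat \<Rightarrow> nat \<Rightarrow> 'a \<Rightarrow> nat \<times> nat" where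
  "UE A R i j 0 \<omega> = (0, 0)"
| "UE A R i j (Suc t) \<omega> =
     (fst (UE A R i j t \<omega>) - snd (UE A R i j t \<omega>) - R i j t \<omega> + A i j t \<omega>,
      snd (UE A R i j t \<omega>) + R i j t \<omega> - fst (UE A R i j t \<omega>))"

definition Ureq :: "'a pproc \<Rightarrow> 'a pproc \<Rightarrow> nat \<Rightarrow> nat \<Rightarrow> nat \<Rightarrow> 'a \<Rightarrow> nat" where
  "Ureq A R i j t \<omega> = fst (UE A R i j t \<omega>)"

definition Estore :: "'a pproc \<Rightarrow> 'a pproc \<Rightarrow> nat \<Rightarrow> nat \<Rightarrow> nat \<Rightarrow> 'a \<Rightarrow> nat" where
  "Estore A R i j t \<omega> = snd (UE A R i j t \<omega>)"

primrec E0 :: "(nat \<Rightarrow> nat \<Rightarrow> 'a \<Rightarrow> nat) \<Rightarrow> 'a pproc \<Rightarrow> nat \<Rightarrow> nat \<Rightarrow> nat \<Rightarrow> 'a \<Rightarrow> nat" where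
  "E0 C F K i 0 \<omega> = 0"
| "E0 C F K i (Suc t) \<omega> = E0 C F K i t \<omega> - (\<Sum>j\<in>{1..K}. F i j t \<omega>) + C i t \<omega>"

definition hist :: "nat \<Rightarrow> 'a pproc \<Rightarrow> 'a pproc \<Rightarrow> (nat \<Rightarrow> nat \<Rightarrow> 'a \<Rightarrow> nat) \<Rightarrow> nat \<Rightarrow> 'a
    \<Rightarrow> (nat \<Rightarrow> nat \<Rightarrow> nat \<Rightarrow> nat \<times> nat \<times> nat \<times> nat) \<times> (nat \<Rightarrow> nat \<Rightarrow> nat)" where
  "hist K A R C t \<omega> =
     ((\<lambda>\<tau> i j. if \<tau> < t \<and> i \<in> {1..K} \<and> j \<in> {1..K}
               then (Estore A R i j \<tau> \<omega>, Ureq A R i j \<tau> \<omega>, A i j \<tau> \<omega>, R i j \<tau> \<omega>)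
               else (0, 0, 0, 0)),
      (\<lambda>\<tau> i. if \<tau> < t \<and> i \<in> {1..K} then C i \<tau> \<omega> else 0))"

definition in_Lambda :: "nat \<Rightarrow> (nat \<Rightarrow> real) \<Rightarrow> real \<Rightarrow> (nat \<Rightarrow> nat \<Rightarrow> real) \<Rightarrow> bool" where
  "in_Lambda K p q l \<longleftrightarrow>
     (\<forall>i\<in>{1..K}. \<forall>j\<in>{1..K}. 0 \<le> l i j) \<and>
     (\<exists>f :: nat \<Rightarrow> nat \<Rightarrow> real.
        (\<forall>i\<in>{1..K}. \<forall>j\<in>{1..K}. 0 \<le> f i j \<and> f i j = f j i) \<and>
        (\<forall>j\<in>{1..K}. (\<Sum>i\<in>{1..K}. f i j) \<le> p j) \<and>
        (\<forall>i\<in>{1..K}. \<forall>j\<in>{1..K}. l i j \<le> q * f i j))"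

text \<open>On-demand constraints for one slot, given e0 j = E_0j(t), u i j = U_ij(t), f i j = F_ij(t).\<close>
definition on_demand :: "nat \<Rightarrow> (nat \<Rightarrow> nat) \<Rightarrow> (nat \<Rightarrow> nat \<Rightarrow> nat) \<Rightarrow> (nat \<Rightarrow> nat \<Rightarrow> nat) \<Rightarrow> bool" where
  "on_demand K e0 u f \<longleftrightarrow>
     (\<forall>j\<in>{1..K}. (\<Sum>i\<in>{1..K}. f i j) \<le> e0 j) \<and>
     (\<forall>i\<in>{1..K}. \<forall>j\<in>{1..K}. f i j \<le> u i j \<and> f i j = f j i) \<and>
     (\<forall>i\<in>{1..K}. \<forall>j\<in>{1..K}.
        (int (e0 i) - (\<Sum>k\<in>{1..K}. int (f i k))) * (int (e0 j) - (\<Sum>k\<in>{1..K}. int (f k j)))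
          * (int (u i j) - int (f i j)) = 0)"

definition seq_space :: "(nat \<Rightarrow> nat) measure" where
  "seq_space = PiM UNIV (\<lambda>_. count_space UNIV)"

definition stationary_proc :: "'a measure \<Rightarrow> (nat \<Rightarrow> 'a \<Rightarrow> nat) \<Rightarrow> bool" where
  "stationary_proc M X \<longleftrightarrow>
     (\<forall>k. distr M seq_space (\<lambda>\<omega> t. X (t + k) \<omega>) = distr M seq_space (\<lambda>\<omega> t. X t \<omega>))"

definition ergodic_proc :: "'a measure \<Rightarrow> (nat \<Rightarrow> 'a \<Rightarrow> nat) \<Rightarrow> bool" where
  "ergodic_proc M X \<longleftrightarrow>
     (\<forall>S\<in>sets seq_space. (\<forall>x. (\<lambda>t. x (Suc t)) \<in> S \<longleftrightarrow> x \<in> S) \<longrightarrow>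
        emeasure M {\<omega>\<in>space M. (\<lambda>t. X t \<omega>) \<in> S} \<in> {0, 1})"

definition B1 :: "'a measure \<Rightarrow> nat \<Rightarrow> 'a pproc \<Rightarrow> (nat \<Rightarrow> nat \<Rightarrow> real) \<Rightarrow> nat \<Rightarrow> real \<Rightarrow> 'a set" where
  "B1 M K A lam t e' = {\<omega>\<in>space M. \<exists>i\<in>{1..K}. \<exists>j\<in>{1..K}.
      \<bar>(\<Sum>\<tau><t. real (A i j \<tau> \<omega>)) / real t - lam i j\<bar> > e'}"

definition S_event :: "'a measure \<Rightarrow> nat \<Rightarrow> 'a pproc \<Rightarrow> 'a pproc \<Rightarrow> (nat \<Rightarrow> nat \<Rightarrow> 'a \<Rightarrow> nat)
    \<Rightarrow> 'a pproc \<Rightarrow> nat \<Rightarrow> 'a set" where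
  "S_event M K A R C F t = {\<omega>\<in>space M. \<forall>j\<in>{1..K}.
      (\<Sum>i\<in>{1..K}. Ureq A R i j t \<omega>) \<le> E0 C F K j t \<omega>}"

definition pairs :: "nat \<Rightarrow> (nat \<times> nat) set" where
  "pairs K = {(i, j). i \<in> {1..K} \<and> j \<in> {1..K} \<and> i \<le> j}"

end

theory Submission
  imports Defs
begin


lemma ennreal_lin2: "0 \<le> a \<Longrightarrow> 0 \<le> b \<Longrightarrow> 0 \<le> c \<Longrightarrow> 0 \<le> d \<Longrightarrow> a*b+c*d = e \<Longrightarrow>
   ennreal a * ennreal b + ennreal c * ennreal d = ennreal e"
  by (metis ennreal_mult ennreal_plus mult_nonneg_nonneg)

lemma binom_mean_nn:
  assumes "0 \<le> q" "q \<le> 1"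
  shows "(\<integral>\<^sup>+k. ennreal (real k) \<partial>binomial_pmf n q) = ennreal (real n * q)"
proof (induction n)
  case 0 then show ?case using assms by (simp add: binomial_pmf_0)
next
  case (Suc n)
  have "(\<integral>\<^sup>+k. ennreal (real k) \<partial>binomial_pmf (Suc n) q) =
     (\<integral>\<^sup>+b. (\<integral>\<^sup>+k. ennreal ((if b then 1 else 0) + real k) \<partial>binomial_pmf n q) \<partial>bernoulli_pmf q)"
    using assms by (subst binomial_pmf_Suc) (auto simp: nn_integral_return)
  also have "\<dots> = (\<integral>\<^sup>+k. ennreal (1 + real k) \<partial>binomial_pmf n q) * q + (\<integral>\<^sup>+k. ennreal (real k) \<partial>binomial_pmf n q) * (1 - q)"
    using assms by simp
  also have "(\<integral>\<^sup>+k. ennreal (1 + real k) \<partial>binomial_pmf n q) = ennreal (1 + real n * q)"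
    using Suc assms by (simp add: nn_integral_add)
  also have "(\<integral>\<^sup>+k. ennreal (real k) \<partial>binomial_pmf n q) = ennreal (real n * q)" by (rule Suc)
  also have "ennreal (1 + real n * q) * ennreal q + ennreal (real n * q) * ennreal (1 - q) = ennreal (real (Suc n) * q)"
    using assms by (intro ennreal_lin2) (auto simp: algebra_simps)
  finally show ?case using Suc by simp
qed

lemma binom_sq_nn:
  assumes "0 \<le> q" "q \<le> 1"
  shows "(\<integral>\<^sup>+k. ennreal ((real k)^2) \<partial>binomial_pmf n q) = ennreal (real n * q + real n * (real n - 1) * q^2)"
proof (induction n)
  case 0 then show ?case using assms by (simp add: binomial_pmf_0)
next
  case (Suc n)
  have nn0: "0 \<le> real n * (real n - 1) * q^2" by (cases n) auto
  have nn: "0 \<le> real n * q + real n * (real n - 1) * q^2"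
    using nn0 assms by (intro add_nonneg_nonneg) auto
  have "(\<integral>\<^sup>+k. ennreal ((real k)^2) \<partial>binomial_pmf (Suc n) q) =
     (\<integral>\<^sup>+b. (\<integral>\<^sup>+k. ennreal (((if b then 1 else 0) + real k)^2) \<partial>binomial_pmf n q) \<partial>bernoulli_pmf q)"
    using assms by (subst binomial_pmf_Suc) (auto simp: nn_integral_return)
  also have "\<dots> = (\<integral>\<^sup>+k. ennreal ((1 + real k)^2) \<partial>binomial_pmf n q) * q
       + (\<integral>\<^sup>+k. ennreal ((real k)^2) \<partial>binomial_pmf n q) * (1 - q)"
    using assms by simp
  also have "(\<integral>\<^sup>+k. ennreal ((1 + real k)^2) \<partial>binomial_pmf n q) = 
      (\<integral>\<^sup>+k. 1 + ennreal (2 * real k) + ennreal ((real k)^2) \<partial>binomial_pmf n q)"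
  proof (intro nn_integral_cong)
    fix k :: nat
    have "(1 + real k)^2 = 1 + 2 * real k + (real k)^2" by algebra
    then show "ennreal ((1 + real k)^2) = 1 + ennreal (2 * real k) + ennreal ((real k)^2)"
      by (simp add: ennreal_plus)
  qed
  also have "\<dots> = 1 + (\<integral>\<^sup>+k. ennreal (2 * real k) \<partial>binomial_pmf n q) + (\<integral>\<^sup>+k. ennreal ((real k)^2) \<partial>binomial_pmf n q)"
    by (simp add: nn_integral_add)
  also have "(\<integral>\<^sup>+k. ennreal (2 * real k) \<partial>binomial_pmf n q) = 2 * ennreal (real n * q)"
    using binom_mean_nn[OF assms, of n] by (simp add: ennreal_mult nn_integral_cmult)
  also have "(\<integral>\<^sup>+k. ennreal ((real k)^2) \<partial>binomial_pmf n q) = ennreal (real n * q + real n * (real n - 1) * q^2)"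
    by (rule Suc)
  also have "1 + 2 * ennreal (real n * q) + ennreal (real n * q + real n * (real n - 1) * q^2) = ennreal (1 + 2 * (real n * q) + (real n * q + real n * (real n - 1) * q^2))"
  proof -
    have a: "0 \<le> 2*(real n*q)" using assms by simp
    show ?thesis
      by (subst ennreal_plus[OF add_nonneg_nonneg[OF zero_le_one a] nn], subst ennreal_plus[OF zero_le_one a])
         (use assms in \<open>simp add: ennreal_mult\<close>)
  qed
  also have "ennreal (1 + 2 * (real n * q) + (real n * q + real n * (real n - 1) * q^2)) * ennreal q
     + ennreal (real n * q + real n * (real n - 1) * q^2) * ennreal (1 - q)
     = ennreal (real (Suc n) * q + real (Suc n) * (real (Suc n) - 1) * q^2)"
  proof (rule ennreal_lin2)
    show "0 \<le> 1 + 2 * (real n * q) + (real n * q + real n * (real n - 1) * q^2)"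
      using nn0 assms by (intro add_nonneg_nonneg) auto
  qed (use assms nn in \<open>auto simp: algebra_simps power2_eq_square\<close>)
  finally show ?case using Suc by simp
qed


lemma suminf_pmf_nat: fixes d :: "nat pmf" shows "(\<Sum>k. ennreal (pmf d k)) = 1"
  using nn_integral_pmf[where p=d and A=UNIV] by (simp add: nn_integral_count_space_nat measure_pmf.emeasure_space_1[simplified])

lemma pred_eq_sets: "f \<in> measurable M (count_space UNIV) \<Longrightarrow> {\<omega>\<in>space M. f \<omega> = c} \<in> sets M"
  by measurable

lemma comp_count_borel: "f \<in> measurable M (count_space UNIV) \<Longrightarrow> (\<lambda>\<omega>. g (f \<omega>)) \<in> borel_measurable M"
  by (rule measurable_compose[of f M "count_space UNIV"]) auto

locale qs =
  fixes M :: "'a measure" and K :: nat and p :: "nat \<Rightarrow> real" and q :: real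
    and C :: "nat \<Rightarrow> nat \<Rightarrow> 'a \<Rightarrow> nat" and A F R :: "'a pproc"
    and Filt :: "nat \<Rightarrow> 'a measure"
  assumes prob: "prob_space M"
    and q: "0 < q" "q \<le> 1"
    and filt_sub: "\<forall>t. subalgebra M (Filt t)"
    and filt_mono: "\<forall>s t. s \<le> t \<longrightarrow> sets (Filt s) \<subseteq> sets (Filt t)"
    and adapt: "\<forall>t. \<forall>i\<in>{1..K}. \<forall>j\<in>{1..K}.
        A i j t \<in> measurable (Filt (Suc t)) (count_space UNIV) \<and>
        R i j t \<in> measurable (Filt (Suc t)) (count_space UNIV) \<and>
        F i j t \<in> measurable (Filt t) (count_space UNIV)"
    and adaptC: "\<forall>t. \<forall>i\<in>{1..K}. C i t \<in> measurable (Filt (Suc t)) (count_space UNIV)"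
    and R_law: "\<forall>t. \<forall>B\<in>sets (Filt t). \<forall>r :: nat \<Rightarrow> nat \<Rightarrow> nat.
        emeasure M (B \<inter> {\<omega>\<in>space M. \<forall>(i, j)\<in>pairs K. R i j t \<omega> = r i j}) =
        (\<integral>\<^sup>+\<omega>\<in>B. (\<Prod>(i, j)\<in>pairs K. ennreal (pmf (binomial_pmf (F i j t \<omega>) q) (r i j))) \<partial>M)"
begin

sublocale prob_space M by (rule prob)

lemma Filt_sub: "subalgebra M (Filt t)" using filt_sub by blast

lemma Filt_sets: "B \<in> sets (Filt t) \<Longrightarrow> B \<in> sets M"
  using Filt_sub[of t] unfolding subalgebra_def by blast

lemma Filt_mono: "s \<le> t \<Longrightarrow> B \<in> sets (Filt s) \<Longrightarrow> B \<in> sets (Filt t)"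
  using filt_mono by blast

lemma meas_Filt_mono:
  assumes "s \<le> t" "f \<in> measurable (Filt s) N" shows "f \<in> measurable (Filt t) N"
proof -
  have sp: "space (Filt s) = space M" "space (Filt t) = space M"
    using Filt_sub[of s] Filt_sub[of t] unfolding subalgebra_def by auto
  have "measurable (Filt s) N \<subseteq> measurable (Filt t) N"
  proof (rule measurable_mono)
    show "sets (Filt s) \<le> sets (Filt t)" using Filt_mono[OF assms(1)] by blast
  qed (use sp in auto)
  then show ?thesis using assms(2) by blast
qed

lemma measF: "i \<in> {1..K} \<Longrightarrow> j \<in> {1..K} \<Longrightarrow> s \<le> t \<Longrightarrow> F i j s \<in> measurable (Filt t) (count_space UNIV)"
  using adapt meas_Filt_mono[of s t "F i j s"] by simp

lemma measR: "i \<in> {1..K} \<Longrightarrow> j \<in> {1..K} \<Longrightarrow> s < t \<Longrightarrow> R i j s \<in> measurable (Filt t) (count_space UNIV)"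
  using adapt meas_Filt_mono[of "Suc s" t "R i j s"] by simp

lemma measA: "i \<in> {1..K} \<Longrightarrow> j \<in> {1..K} \<Longrightarrow> s < t \<Longrightarrow> A i j s \<in> measurable (Filt t) (count_space UNIV)"
  using adapt meas_Filt_mono[of "Suc s" t "A i j s"] by simp

lemma measC: "i \<in> {1..K} \<Longrightarrow> s < t \<Longrightarrow> C i s \<in> measurable (Filt t) (count_space UNIV)"
  using adaptC meas_Filt_mono[of "Suc s" t "C i s"] by simp

lemma toM: "f \<in> measurable (Filt t) N \<Longrightarrow> f \<in> measurable M N"
  using measurable_from_subalg[OF Filt_sub] .

lemma measF_M: "i \<in> {1..K} \<Longrightarrow> j \<in> {1..K} \<Longrightarrow> F i j s \<in> measurable M (count_space UNIV)"
  using toM measF[of i j s s] by simp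
lemma measR_M: "i \<in> {1..K} \<Longrightarrow> j \<in> {1..K} \<Longrightarrow> R i j s \<in> measurable M (count_space UNIV)"
  using toM measR[of i j s "Suc s"] by simp
lemma measA_M: "i \<in> {1..K} \<Longrightarrow> j \<in> {1..K} \<Longrightarrow> A i j s \<in> measurable M (count_space UNIV)"
  using toM measA[of i j s "Suc s"] by simp
lemma measC_M: "i \<in> {1..K} \<Longrightarrow> C i s \<in> measurable M (count_space UNIV)"
  using toM measC[of i s "Suc s"] by simp

lemma pairs_sub: "x \<in> pairs K \<Longrightarrow> fst x \<in> {1..K} \<and> snd x \<in> {1..K}"
  by (auto simp: pairs_def)

lemma finite_pairs: "finite (pairs K)"
  by (rule finite_subset[of _ "{1..K} \<times> {1..K}"]) (auto simp: pairs_def)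

lemma R_marg_gen:
  assumes "finite D" "D \<subseteq> pairs K" "B \<in> sets (Filt t)"
  shows "emeasure M (B \<inter> {\<omega>\<in>space M. \<forall>x\<in>pairs K - D. R (fst x) (snd x) t \<omega> = r x}) =
    (\<integral>\<^sup>+\<omega>\<in>B. (\<Prod>x\<in>pairs K - D. ennreal (pmf (binomial_pmf (F (fst x) (snd x) t \<omega>) q) (r x))) \<partial>M)"
  using assms(1,2)
proof (induction D arbitrary: r rule: finite_induct)
  case empty
  have set_eq: "{\<omega>\<in>space M. \<forall>(i, j)\<in>pairs K. R i j t \<omega> = curry r i j}
     = {\<omega>\<in>space M. \<forall>x\<in>pairs K - {}. R (fst x) (snd x) t \<omega> = r x}"
    by auto
  have prod_eq: "(\<Prod>(i, j)\<in>pairs K. ennreal (pmf (binomial_pmf (F i j t \<omega>) q) (curry r i j)))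
     = (\<Prod>x\<in>pairs K - {}. ennreal (pmf (binomial_pmf (F (fst x) (snd x) t \<omega>) q) (r x)))" for \<omega>
    by (simp add: case_prod_beta)
  show ?case using R_law[rule_format, OF assms(3), of "curry r"] unfolding set_eq prod_eq .
next
  case (insert x D r)
  define P where "P = pairs K"
  have x: "x \<in> P - D" using insert by (auto simp: P_def)
  have DP: "D \<subseteq> P" using insert by (auto simp: P_def)
  have fin: "finite (P - D)" using finite_pairs by (auto simp: P_def)
  define g where "g y \<omega> k = ennreal (pmf (binomial_pmf (F (fst y) (snd y) t \<omega>) q) k)" for y \<omega> k
  define Ek where "Ek k = B \<inter> {\<omega>\<in>space M. \<forall>y\<in>P - D. R (fst y) (snd y) t \<omega> = (r(x:=k)) y}" for k
  have union: "B \<inter> {\<omega>\<in>space M. \<forall>y\<in>P - insert x D. R (fst y) (snd y) t \<omega> = r y} = (\<Union>k. Ek k)"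
  proof (intro equalityI subsetI)
    fix \<omega> assume "\<omega> \<in> B \<inter> {\<omega>\<in>space M. \<forall>y\<in>P - insert x D. R (fst y) (snd y) t \<omega> = r y}"
    then have "\<omega> \<in> Ek (R (fst x) (snd x) t \<omega>)" unfolding Ek_def by auto
    then show "\<omega> \<in> (\<Union>k. Ek k)" by blast
  next
    fix \<omega> assume "\<omega> \<in> (\<Union>k. Ek k)"
    then obtain k where k: "\<omega> \<in> Ek k" by blast
    have "R (fst y) (snd y) t \<omega> = r y" if y: "y \<in> P - insert x D" for y
    proof -
      have "y \<in> P - D" "y \<noteq> x" using y by auto
      then show ?thesis using k by (auto simp: Ek_def)
    qed
    then show "\<omega> \<in> B \<inter> {\<omega>\<in>space M. \<forall>y\<in>P - insert x D. R (fst y) (snd y) t \<omega> = r y}"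
      using k by (auto simp: Ek_def)
  qed
  have disj: "disjoint_family Ek"
    unfolding disjoint_family_on_def Ek_def using x by auto
  have measEk: "Ek k \<in> sets M" for k
  proof -
    have "{\<omega>\<in>space M. \<forall>y\<in>P - D. R (fst y) (snd y) t \<omega> = (r(x:=k)) y} \<in> sets M"
      using fin by (intro sets.sets_Collect_finite_All pred_eq_sets measR_M) (auto simp: P_def dest: pairs_sub)
    then show ?thesis unfolding Ek_def using Filt_sets[OF assms(3)] by blast
  qed
  have measg: "(\<lambda>\<omega>. g y \<omega> k) \<in> borel_measurable M" if "y \<in> P" for y k
    unfolding g_def using that pairs_sub[of y] by (intro comp_count_borel measF_M) (auto simp: P_def)
  have "emeasure M (B \<inter> {\<omega>\<in>space M. \<forall>y\<in>P - insert x D. R (fst y) (snd y) t \<omega> = r y})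
      = (\<Sum>k. emeasure M (Ek k))"
    using union disj measEk by (simp add: suminf_emeasure image_subset_iff)
  also have "\<dots> = (\<Sum>k. \<integral>\<^sup>+\<omega>. (\<Prod>y\<in>P - D. g y \<omega> ((r(x:=k)) y)) * indicator B \<omega> \<partial>M)"
    using insert.IH[OF DP[unfolded P_def]] unfolding Ek_def g_def P_def by simp
  also have "\<dots> = (\<integral>\<^sup>+\<omega>. (\<Sum>k. (\<Prod>y\<in>P - D. g y \<omega> ((r(x:=k)) y)) * indicator B \<omega>) \<partial>M)"
    using measg Filt_sets[OF assms(3)] DP
    by (intro nn_integral_suminf[symmetric]) (auto intro!: borel_measurable_prod_ennreal)
  also have "\<dots> = (\<integral>\<^sup>+\<omega>. (\<Prod>y\<in>P - insert x D. g y \<omega> (r y)) * indicator B \<omega> \<partial>M)"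
  proof (intro nn_integral_cong)
    fix \<omega>
    have "(\<Prod>y\<in>P - D. g y \<omega> ((r(x:=k)) y)) = g x \<omega> k * (\<Prod>y\<in>P - insert x D. g y \<omega> (r y))" for k
    proof -
      have "(\<Prod>y\<in>P - D. g y \<omega> ((r(x:=k)) y)) = g x \<omega> k * (\<Prod>y\<in>(P - D) - {x}. g y \<omega> ((r(x:=k)) y))"
        by (subst prod.remove[OF fin x]) (simp only: fun_upd_same)
      also have "(\<Prod>y\<in>(P - D) - {x}. g y \<omega> ((r(x:=k)) y)) = (\<Prod>y\<in>P - insert x D. g y \<omega> (r y))"
        by (intro prod.cong) auto
      finally show ?thesis .
    qed
    then have "(\<Sum>k. (\<Prod>y\<in>P - D. g y \<omega> ((r(x:=k)) y)) * indicator B \<omega>)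
       = (\<Sum>k. g x \<omega> k * ((\<Prod>y\<in>P - insert x D. g y \<omega> (r y)) * indicator B \<omega>))"
      by (simp add: mult.assoc)
    also have "\<dots> = (\<Sum>k. g x \<omega> k) * ((\<Prod>y\<in>P - insert x D. g y \<omega> (r y)) * indicator B \<omega>)"
      by (simp add: ac_simps)
    also have "(\<Sum>k. g x \<omega> k) = 1" unfolding g_def by (rule suminf_pmf_nat)
    finally show "(\<Sum>k. (\<Prod>y\<in>P - D. g y \<omega> ((r(x:=k)) y)) * indicator B \<omega>)
       = (\<Prod>y\<in>P - insert x D. g y \<omega> (r y)) * indicator B \<omega>" by simp
  qed
  finally show ?case unfolding g_def P_def .
qed

lemma R_marg:
  assumes "(a, b) \<in> pairs K" "B \<in> sets (Filt t)"
  shows "emeasure M (B \<inter> {\<omega>\<in>space M. R a b t \<omega> = n}) =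
    (\<integral>\<^sup>+\<omega>\<in>B. ennreal (pmf (binomial_pmf (F a b t \<omega>) q) n) \<partial>M)"
proof -
  have *: "pairs K - (pairs K - {(a,b)}) = {(a,b)}" using assms by auto
  show ?thesis
    using R_marg_gen[of "pairs K - {(a,b)}" B t "\<lambda>_. n"] finite_pairs assms
    unfolding * by simp
qed

end


lemma binom_var_nn:
  assumes "0 \<le> q" "q \<le> 1"
  shows "(\<integral>\<^sup>+k. ennreal ((real k - real n * q)^2) \<partial>binomial_pmf n q) = ennreal (real n * q * (1 - q))"
proof -
  let ?B = "measure_pmf (binomial_pmf n q)"
  have qq: "q \<in> {0..1}" using assms by auto
  have i1: "integrable ?B (\<lambda>k. real k)" using qq by auto
  have i2: "integrable ?B (\<lambda>k. (real k)^2)" using qq by auto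
  have e1: "measure_pmf.expectation (binomial_pmf n q) (\<lambda>k. real k) = real n * q"
  proof -
    have "ennreal (measure_pmf.expectation (binomial_pmf n q) (\<lambda>k. real k)) = ennreal (real n * q)"
      using binom_mean_nn[OF assms, of n] nn_integral_eq_integral[OF i1] by simp
    then show ?thesis using assms by (subst (asm) ennreal_inj) (auto intro: integral_nonneg_AE)
  qed
  have e2: "measure_pmf.expectation (binomial_pmf n q) (\<lambda>k. (real k)^2) = real n * q + real n * (real n - 1) * q^2"
  proof -
    have nn0: "0 \<le> real n * (real n - 1) * q^2" by (cases n) auto
    have "ennreal (measure_pmf.expectation (binomial_pmf n q) (\<lambda>k. (real k)^2)) = ennreal (real n * q + real n * (real n - 1) * q^2)"
      using binom_sq_nn[OF assms, of n] nn_integral_eq_integral[OF i2] by simp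
    then show ?thesis using assms nn0 by (subst (asm) ennreal_inj) (auto intro: integral_nonneg_AE)
  qed
  have "measure_pmf.expectation (binomial_pmf n q) (\<lambda>k. (real k - real n * q)^2)
      = measure_pmf.expectation (binomial_pmf n q) (\<lambda>k. (real k)^2 - 2 * (real n * q) * real k + (real n * q)^2)"
    by (rule Bochner_Integration.integral_cong) (simp_all add: power2_diff algebra_simps)
  also have "\<dots> = real n * q * (1 - q)"
    using i1 i2 e1 e2 by (simp add: algebra_simps power2_eq_square)
  finally have e3: "measure_pmf.expectation (binomial_pmf n q) (\<lambda>k. (real k - real n * q)^2) = real n * q * (1 - q)" .
  have i3: "integrable ?B (\<lambda>k. (real k - real n * q)^2)" using qq by auto
  show ?thesis using nn_integral_eq_integral[OF i3] e3 by simp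
qed

lemma nn_eq_to_real:
  fixes f g :: "'a \<Rightarrow> real"
  assumes "integrable M f" "integrable M g" "AE x in M. 0 \<le> f x" "AE x in M. 0 \<le> g x"
    "(\<integral>\<^sup>+x. ennreal (f x) \<partial>M) = (\<integral>\<^sup>+x. ennreal (g x) \<partial>M)"
  shows "integral\<^sup>L M f = integral\<^sup>L M g"
proof -
  have "ennreal (integral\<^sup>L M f) = ennreal (integral\<^sup>L M g)"
    using assms nn_integral_eq_integral[OF assms(1,3)] nn_integral_eq_integral[OF assms(2,4)] by simp
  then show ?thesis using assms by (subst (asm) ennreal_inj) (auto intro: integral_nonneg_AE)
qed

context qs
begin

lemma R_cond_k:
  assumes ab: "(a, b) \<in> pairs K" and h: "h \<in> borel_measurable (Filt t)"
  shows "(\<integral>\<^sup>+\<omega>. h \<omega> * indicator {\<omega>\<in>space M. R a b t \<omega> = n} \<omega> \<partial>M)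
       = (\<integral>\<^sup>+\<omega>. h \<omega> * ennreal (pmf (binomial_pmf (F a b t \<omega>) q) n) \<partial>M)"
proof -
  have abK: "a \<in> {1..K}" "b \<in> {1..K}" using pairs_sub[OF ab] by auto
  define S where "S = {\<omega>\<in>space M. R a b t \<omega> = n}"
  define g where "g \<omega> = ennreal (pmf (binomial_pmf (F a b t \<omega>) q) n)" for \<omega>
  have S: "S \<in> sets M" unfolding S_def by (rule pred_eq_sets[OF measR_M[OF abK]])
  have mI: "indicator S \<in> borel_measurable M" using S by simp
  have mg: "g \<in> borel_measurable M" unfolding g_def by (rule comp_count_borel[OF measF_M[OF abK]])
  have hM: "h \<in> borel_measurable M" using toM[OF h] .
  define N1 where "N1 = density M (indicator S)"
  define N2 where "N2 = density M g"
  have sub1: "subalgebra N1 (Filt t)" using Filt_sub[of t] unfolding N1_def subalgebra_def by simp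
  have sub2: "subalgebra N2 (Filt t)" using Filt_sub[of t] unfolding N2_def subalgebra_def by simp
  have eq: "restr_to_subalg N1 (Filt t) = restr_to_subalg N2 (Filt t)"
  proof (rule measure_eqI)
    show "sets (restr_to_subalg N1 (Filt t)) = sets (restr_to_subalg N2 (Filt t))"
      using sets_restr_to_subalg[OF sub1] sets_restr_to_subalg[OF sub2] by simp
  next
    fix B assume "B \<in> sets (restr_to_subalg N1 (Filt t))"
    then have B: "B \<in> sets (Filt t)" using sets_restr_to_subalg[OF sub1] by simp
    have BM: "B \<in> sets M" using Filt_sets[OF B] .
    have "emeasure (restr_to_subalg N1 (Filt t)) B = emeasure N1 B"
      using emeasure_restr_to_subalg[OF sub1 B] .
    also have "\<dots> = (\<integral>\<^sup>+\<omega>. indicator S \<omega> * indicator B \<omega> \<partial>M)"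
      unfolding N1_def by (rule emeasure_density[OF mI BM])
    also have "\<dots> = (\<integral>\<^sup>+\<omega>. indicator (B \<inter> S) \<omega> \<partial>M)"
      by (intro nn_integral_cong) (simp split: split_indicator)
    also have "\<dots> = emeasure M (B \<inter> S)" using BM S by simp
    also have "\<dots> = (\<integral>\<^sup>+\<omega>\<in>B. g \<omega> \<partial>M)" unfolding S_def g_def by (rule R_marg[OF ab B])
    also have "\<dots> = emeasure N2 B" unfolding N2_def by (rule emeasure_density[OF mg BM, symmetric])
    also have "\<dots> = emeasure (restr_to_subalg N2 (Filt t)) B"
      using emeasure_restr_to_subalg[OF sub2 B] by simp
    finally show "emeasure (restr_to_subalg N1 (Filt t)) B = emeasure (restr_to_subalg N2 (Filt t)) B" .
  qed
  have "(\<integral>\<^sup>+\<omega>. h \<omega> * indicator S \<omega> \<partial>M) = (\<integral>\<^sup>+\<omega>. h \<omega> \<partial>N1)"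
    unfolding N1_def nn_integral_density[OF mI hM] by (simp only: mult.commute)
  also have "\<dots> = (\<integral>\<^sup>+\<omega>. h \<omega> \<partial>restr_to_subalg N1 (Filt t))"
    using nn_integral_subalgebra2[OF sub1 h] by simp
  also have "\<dots> = (\<integral>\<^sup>+\<omega>. h \<omega> \<partial>restr_to_subalg N2 (Filt t))" using eq by simp
  also have "\<dots> = (\<integral>\<^sup>+\<omega>. h \<omega> \<partial>N2)"
    using nn_integral_subalgebra2[OF sub2 h] by simp
  also have "\<dots> = (\<integral>\<^sup>+\<omega>. h \<omega> * g \<omega> \<partial>M)"
    unfolding N2_def nn_integral_density[OF mg hM] by (simp only: mult.commute)
  finally show ?thesis unfolding S_def g_def .
qed

lemma R_cond:
  assumes ab: "(a, b) \<in> pairs K" and h: "\<And>k. (\<lambda>\<omega>. h \<omega> k) \<in> borel_measurable (Filt t)"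
  shows "(\<integral>\<^sup>+\<omega>. h \<omega> (R a b t \<omega>) \<partial>M)
       = (\<integral>\<^sup>+\<omega>. (\<integral>\<^sup>+k. h \<omega> k \<partial>binomial_pmf (F a b t \<omega>) q) \<partial>M)"
proof -
  have abK: "a \<in> {1..K}" "b \<in> {1..K}" using pairs_sub[OF ab] by auto
  define S where "S n = {\<omega>\<in>space M. R a b t \<omega> = n}" for n
  have S: "S n \<in> sets M" for n unfolding S_def by (rule pred_eq_sets[OF measR_M[OF abK]])
  have hM: "(\<lambda>\<omega>. h \<omega> k) \<in> borel_measurable M" for k using toM[OF h] .
  have mg: "(\<lambda>\<omega>. ennreal (pmf (binomial_pmf (F a b t \<omega>) q) k)) \<in> borel_measurable M" for k
    by (rule comp_count_borel[OF measF_M[OF abK]])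
  have "(\<integral>\<^sup>+\<omega>. h \<omega> (R a b t \<omega>) \<partial>M) = (\<integral>\<^sup>+\<omega>. (\<Sum>n. h \<omega> n * indicator (S n) \<omega>) \<partial>M)"
  proof (intro nn_integral_cong)
    fix \<omega> assume "\<omega> \<in> space M"
    then have "(\<Sum>n. h \<omega> n * indicator (S n) \<omega>) = (\<Sum>n\<in>{R a b t \<omega>}. h \<omega> n * indicator (S n) \<omega>)"
      by (intro suminf_finite) (auto simp: S_def)
    also have "\<dots> = h \<omega> (R a b t \<omega>)" using \<open>\<omega> \<in> space M\<close> by (simp add: S_def)
    finally show "h \<omega> (R a b t \<omega>) = (\<Sum>n. h \<omega> n * indicator (S n) \<omega>)" by simp
  qed
  also have "\<dots> = (\<Sum>n. \<integral>\<^sup>+\<omega>. h \<omega> n * indicator (S n) \<omega> \<partial>M)"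
    using hM S by (intro nn_integral_suminf) auto
  also have "\<dots> = (\<Sum>n. \<integral>\<^sup>+\<omega>. h \<omega> n * ennreal (pmf (binomial_pmf (F a b t \<omega>) q) n) \<partial>M)"
    unfolding S_def using R_cond_k[OF ab h] by simp
  also have "\<dots> = (\<integral>\<^sup>+\<omega>. (\<Sum>n. h \<omega> n * ennreal (pmf (binomial_pmf (F a b t \<omega>) q) n)) \<partial>M)"
    using hM mg by (intro nn_integral_suminf[symmetric]) auto
  also have "\<dots> = (\<integral>\<^sup>+\<omega>. (\<integral>\<^sup>+k. h \<omega> k \<partial>binomial_pmf (F a b t \<omega>) q) \<partial>M)"
    by (simp add: nn_integral_measure_pmf nn_integral_count_space_nat mult.commute)
  finally show ?thesis .
qed

end


lemma count_to_borel: "f \<in> measurable M (count_space UNIV) \<Longrightarrow> f \<in> borel_measurable M"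
  using comp_count_borel[of f M "\<lambda>x. x"] by simp

context qs
begin

lemma R_le_F_AE:
  assumes ab: "(a, b) \<in> pairs K"
  shows "AE \<omega> in M. R a b t \<omega> \<le> F a b t \<omega>"
proof -
  have abK: "a \<in> {1..K}" "b \<in> {1..K}" using pairs_sub[OF ab] by auto
  note [measurable] = count_to_borel[OF measF_M[OF abK]] count_to_borel[OF measR_M[OF abK]]
  define h where "h \<omega> k = (if F a b t \<omega> < k then 1 else 0 :: ennreal)" for \<omega> k
  have hm: "(\<lambda>\<omega>. h \<omega> k) \<in> borel_measurable (Filt t)" for k
    unfolding h_def by (rule comp_count_borel[OF measF[OF abK le_refl]])
  have inner0: "(\<integral>\<^sup>+k. h \<omega> k \<partial>binomial_pmf (F a b t \<omega>) q) = 0" for \<omega>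
  proof -
    have "AE k in binomial_pmf (F a b t \<omega>) q. h \<omega> k = 0"
      using q by (auto simp: AE_measure_pmf_iff h_def set_pmf_binomial_eq split: if_splits)
    then have "(\<integral>\<^sup>+k. h \<omega> k \<partial>binomial_pmf (F a b t \<omega>) q) = (\<integral>\<^sup>+k. 0 \<partial>binomial_pmf (F a b t \<omega>) q)"
      by (rule nn_integral_cong_AE)
    then show ?thesis by simp
  qed
  have "(\<integral>\<^sup>+\<omega>. h \<omega> (R a b t \<omega>) \<partial>M) = 0" using R_cond[where h=h, OF ab hm] inner0 by simp
  moreover have "(\<lambda>\<omega>. h \<omega> (R a b t \<omega>)) \<in> borel_measurable M"
    unfolding h_def by measurable
  ultimately have "AE \<omega> in M. h \<omega> (R a b t \<omega>) = 0" by (simp add: nn_integral_0_iff_AE)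
  then show ?thesis by eventually_elim (auto simp: h_def split: if_splits)
qed

lemma R_mean:
  assumes ab: "(a, b) \<in> pairs K" and Y: "Y \<in> borel_measurable (Filt t)"
  shows "(\<integral>\<^sup>+\<omega>. Y \<omega> * ennreal (real (R a b t \<omega>)) \<partial>M) = (\<integral>\<^sup>+\<omega>. Y \<omega> * ennreal (real (F a b t \<omega>) * q) \<partial>M)"
proof -
  define h where "h \<omega> k = Y \<omega> * ennreal (real k)" for \<omega> k
  have hm: "(\<lambda>\<omega>. h \<omega> k) \<in> borel_measurable (Filt t)" for k
    unfolding h_def using Y by measurable
  have "(\<integral>\<^sup>+\<omega>. h \<omega> (R a b t \<omega>) \<partial>M) = (\<integral>\<^sup>+\<omega>. (\<integral>\<^sup>+k. h \<omega> k \<partial>binomial_pmf (F a b t \<omega>) q) \<partial>M)"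
    by (rule R_cond[OF ab hm])
  also have "\<dots> = (\<integral>\<^sup>+\<omega>. Y \<omega> * ennreal (real (F a b t \<omega>) * q) \<partial>M)"
    unfolding h_def using q by (simp add: nn_integral_cmult binom_mean_nn)
  finally show ?thesis unfolding h_def .
qed

lemma R_var:
  assumes ab: "(a, b) \<in> pairs K"
  shows "(\<integral>\<^sup>+\<omega>. ennreal ((real (R a b t \<omega>) - real (F a b t \<omega>) * q)^2) \<partial>M)
       = (\<integral>\<^sup>+\<omega>. ennreal (real (F a b t \<omega>) * q * (1 - q)) \<partial>M)"
proof -
  have abK: "a \<in> {1..K}" "b \<in> {1..K}" using pairs_sub[OF ab] by auto
  define h where "h \<omega> k = ennreal ((real k - real (F a b t \<omega>) * q)^2)" for \<omega> k
  have hm: "(\<lambda>\<omega>. h \<omega> k) \<in> borel_measurable (Filt t)" for k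
    unfolding h_def by (rule comp_count_borel[OF measF[OF abK le_refl]])
  have "(\<integral>\<^sup>+\<omega>. h \<omega> (R a b t \<omega>) \<partial>M) = (\<integral>\<^sup>+\<omega>. (\<integral>\<^sup>+k. h \<omega> k \<partial>binomial_pmf (F a b t \<omega>) q) \<partial>M)"
    by (rule R_cond[OF ab hm])
  also have "\<dots> = (\<integral>\<^sup>+\<omega>. ennreal (real (F a b t \<omega>) * q * (1 - q)) \<partial>M)"
    unfolding h_def using q by (simp add: binom_var_nn)
  finally show ?thesis unfolding h_def .
qed

lemma R_mean_real:
  assumes ab: "(a, b) \<in> pairs K" and Z: "Z \<in> borel_measurable (Filt t)"
    and Z0: "\<And>\<omega>. 0 \<le> Z \<omega>" and Zb: "AE \<omega> in M. Z \<omega> \<le> B"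
    and Fb: "\<forall>\<omega>\<in>space M. F a b t \<omega> \<le> N"
  shows "integrable M (\<lambda>\<omega>. Z \<omega> * real (R a b t \<omega>))"
    "integrable M (\<lambda>\<omega>. Z \<omega> * (real (F a b t \<omega>) * q))"
    "(\<integral>\<omega>. Z \<omega> * real (R a b t \<omega>) \<partial>M) = (\<integral>\<omega>. Z \<omega> * (real (F a b t \<omega>) * q) \<partial>M)"
proof -
  have abK: "a \<in> {1..K}" "b \<in> {1..K}" using pairs_sub[OF ab] by auto
  note [measurable] = measF_M[OF abK] measR_M[OF abK]
  have ZM[measurable]: "Z \<in> borel_measurable M" using toM[OF Z] .
  have B0: "AE \<omega> in M. R a b t \<omega> \<le> N"
    by (rule AE_mp[OF R_le_F_AE[OF ab, of t] AE_I2]) (use Fb in auto)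
  show i1: "integrable M (\<lambda>\<omega>. Z \<omega> * real (R a b t \<omega>))"
  proof (rule integrable_const_bound[where B="B * real N"])
    show "AE \<omega> in M. norm (Z \<omega> * real (R a b t \<omega>)) \<le> B * real N"
      using Zb B0 proof eventually_elim
      case (elim \<omega>) then show ?case using Z0[of \<omega>]
        by (auto simp: abs_mult intro!: mult_mono)
    qed
  qed measurable
  show i2: "integrable M (\<lambda>\<omega>. Z \<omega> * (real (F a b t \<omega>) * q))"
  proof (rule integrable_const_bound[where B="B * (real N * q)"])
    show "AE \<omega> in M. norm (Z \<omega> * (real (F a b t \<omega>) * q)) \<le> B * (real N * q)"
      using Zb AE_space proof eventually_elim
      case (elim \<omega>)
      then show ?case using Z0[of \<omega>] q Fb
        by (auto simp: abs_mult intro!: mult_mono)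
    qed
  qed measurable
  show "(\<integral>\<omega>. Z \<omega> * real (R a b t \<omega>) \<partial>M) = (\<integral>\<omega>. Z \<omega> * (real (F a b t \<omega>) * q) \<partial>M)"
  proof (rule nn_eq_to_real[OF i1 i2])
    show "(\<integral>\<^sup>+\<omega>. ennreal (Z \<omega> * real (R a b t \<omega>)) \<partial>M) = (\<integral>\<^sup>+\<omega>. ennreal (Z \<omega> * (real (F a b t \<omega>) * q)) \<partial>M)"
      using R_mean[OF ab, of "\<lambda>\<omega>. ennreal (Z \<omega>)"] Z0 q Z by (simp add: ennreal_mult)
  qed (use Z0 q in auto)
qed

end


locale qs2 = qs +
  assumes p: "\<forall>i\<in>{1..K}. 0 \<le> p i \<and> p i \<le> 1"
    and sym: "\<forall>t. \<forall>i\<in>{1..K}. \<forall>j\<in>{1..K}. \<forall>\<omega>\<in>space M.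
        A i j t \<omega> = A j i t \<omega> \<and> R i j t \<omega> = R j i t \<omega> \<and> F i j t \<omega> = F j i t \<omega>"
    and C_indep: "prob_space.indep_vars M (\<lambda>_. count_space UNIV) (\<lambda>(i, t). C i t) ({1..K} \<times> UNIV)"
    and C_bern: "\<forall>i\<in>{1..K}. \<forall>t. (\<forall>\<omega>\<in>space M. C i t \<omega> \<le> 1) \<and>
        measure M {\<omega>\<in>space M. C i t \<omega> = 1} = p i"
    and ondemand: "\<forall>t. \<forall>\<omega>\<in>space M.
        on_demand K (\<lambda>j. E0 C F K j t \<omega>) (\<lambda>i j. Ureq A R i j t \<omega>) (\<lambda>i j. F i j t \<omega>)"
begin

lemma E0_sum:
  assumes w: "\<omega> \<in> space M" and j: "j \<in> {1..K}"
  shows "E0 C F K j t \<omega> + (\<Sum>\<tau><t. \<Sum>i\<in>{1..K}. F i j \<tau> \<omega>) = (\<Sum>\<tau><t. C j \<tau> \<omega>)"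
proof (induction t)
  case 0 then show ?case by simp
next
  case (Suc t)
  have s: "(\<Sum>k\<in>{1..K}. F j k t \<omega>) = (\<Sum>i\<in>{1..K}. F i j t \<omega>)"
    using sym w j by (intro sum.cong) auto
  have le: "(\<Sum>i\<in>{1..K}. F i j t \<omega>) \<le> E0 C F K j t \<omega>"
    using ondemand w j unfolding on_demand_def by blast
  show ?case using Suc s le by simp
qed

lemma C_le1: "\<omega> \<in> space M \<Longrightarrow> j \<in> {1..K} \<Longrightarrow> C j \<tau> \<omega> \<le> 1"
  using C_bern by blast

lemma Csum_le: "\<omega> \<in> space M \<Longrightarrow> j \<in> {1..K} \<Longrightarrow> (\<Sum>\<tau><t. C j \<tau> \<omega>) \<le> t"
  using sum_bounded_above[of "{..<t}" "\<lambda>\<tau>. C j \<tau> \<omega>" 1] C_le1 by simp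

lemma F_le:
  assumes w: "\<omega> \<in> space M" and i: "i \<in> {1..K}" and j: "j \<in> {1..K}"
  shows "F i j t \<omega> \<le> t"
proof -
  have "F i j t \<omega> \<le> (\<Sum>i\<in>{1..K}. F i j t \<omega>)" using i by (intro member_le_sum) auto
  also have "\<dots> \<le> E0 C F K j t \<omega>" using ondemand w j unfolding on_demand_def by blast
  also have "\<dots> \<le> (\<Sum>\<tau><t. C j \<tau> \<omega>)" using E0_sum[OF w j, of t] by linarith
  also have "\<dots> \<le> t" using Csum_le[OF w j] .
  finally show ?thesis .
qed

lemma Fsum_le:
  assumes w: "\<omega> \<in> space M" and i: "i \<in> {1..K}" and j: "j \<in> {1..K}"
  shows "(\<Sum>\<tau><t. F i j \<tau> \<omega>) \<le> (\<Sum>\<tau><t. \<Sum>i\<in>{1..K}. F i j \<tau> \<omega>)"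
    "(\<Sum>\<tau><t. \<Sum>i\<in>{1..K}. F i j \<tau> \<omega>) \<le> (\<Sum>\<tau><t. C j \<tau> \<omega>)"
    "(\<Sum>\<tau><t. F i j \<tau> \<omega>) \<le> t"
proof -
  show 1: "(\<Sum>\<tau><t. F i j \<tau> \<omega>) \<le> (\<Sum>\<tau><t. \<Sum>i\<in>{1..K}. F i j \<tau> \<omega>)"
    using i by (intro sum_mono member_le_sum) auto
  show 2: "(\<Sum>\<tau><t. \<Sum>i\<in>{1..K}. F i j \<tau> \<omega>) \<le> (\<Sum>\<tau><t. C j \<tau> \<omega>)"
    using E0_sum[OF w j, of t] by linarith
  show "(\<Sum>\<tau><t. F i j \<tau> \<omega>) \<le> t" using 1 2 Csum_le[OF w j, of t] by linarith
qed

lemma UE_good: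
  assumes w: "\<omega> \<in> space M" and i: "i \<in> {1..K}" and j: "j \<in> {1..K}"
    and good: "\<forall>\<tau><t. R i j \<tau> \<omega> \<le> F i j \<tau> \<omega>"
  shows "Estore A R i j t \<omega> = 0 \<and> Ureq A R i j t \<omega> + (\<Sum>\<tau><t. R i j \<tau> \<omega>) = (\<Sum>\<tau><t. A i j \<tau> \<omega>)"
  using good
proof (induction t)
  case 0 then show ?case by (simp add: Estore_def Ureq_def)
next
  case (Suc t)
  then have IH: "Estore A R i j t \<omega> = 0" "Ureq A R i j t \<omega> + (\<Sum>\<tau><t. R i j \<tau> \<omega>) = (\<Sum>\<tau><t. A i j \<tau> \<omega>)"
    by auto
  have FU: "F i j t \<omega> \<le> Ureq A R i j t \<omega>" using ondemand w i j unfolding on_demand_def by blast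
  have RF: "R i j t \<omega> \<le> F i j t \<omega>" using Suc.prems by auto
  show ?case using IH FU RF by (simp add: Estore_def Ureq_def)
qed

end


lemma (in finite_measure) sq_sum_orth:
  fixes X :: "nat \<Rightarrow> 'a \<Rightarrow> real"
  assumes m: "\<And>\<tau>. \<tau> < n \<Longrightarrow> X \<tau> \<in> borel_measurable M"
    and b: "\<And>\<tau>. \<tau> < n \<Longrightarrow> AE \<omega> in M. \<bar>X \<tau> \<omega>\<bar> \<le> B"
    and o: "\<And>\<sigma> \<tau>. \<sigma> < \<tau> \<Longrightarrow> \<tau> < n \<Longrightarrow> (\<integral>\<omega>. X \<sigma> \<omega> * X \<tau> \<omega> \<partial>M) = 0"
  shows "(\<integral>\<omega>. (\<Sum>\<tau><n. X \<tau> \<omega>)^2 \<partial>M) = (\<Sum>\<tau><n. \<integral>\<omega>. (X \<tau> \<omega>)^2 \<partial>M)"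
proof -
  have int: "integrable M (\<lambda>\<omega>. X \<sigma> \<omega> * X \<tau> \<omega>)" if "\<sigma> < n" "\<tau> < n" for \<sigma> \<tau>
  proof (rule integrable_const_bound[where B="B*B"])
    show "AE \<omega> in M. norm (X \<sigma> \<omega> * X \<tau> \<omega>) \<le> B * B"
      using b[OF that(1)] b[OF that(2)] proof eventually_elim
      case (elim \<omega>) then show ?case by (auto simp: abs_mult intro!: mult_mono)
    qed
  qed (use m that in auto)
  have o2: "(\<integral>\<omega>. X \<sigma> \<omega> * X \<tau> \<omega> \<partial>M) = 0" if "\<sigma> < n" "\<tau> < n" "\<sigma> \<noteq> \<tau>" for \<sigma> \<tau>
  proof (cases "\<sigma> < \<tau>")
    case True then show ?thesis using o that by auto
  next
    case False then have "\<tau> < \<sigma>" using that by auto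
    then show ?thesis using o[of \<tau> \<sigma>] that by (simp add: mult.commute)
  qed
  have "(\<integral>\<omega>. (\<Sum>\<tau><n. X \<tau> \<omega>)^2 \<partial>M) = (\<integral>\<omega>. (\<Sum>\<sigma><n. \<Sum>\<tau><n. X \<sigma> \<omega> * X \<tau> \<omega>) \<partial>M)"
    by (simp add: power2_eq_square sum_product)
  also have "\<dots> = (\<Sum>\<sigma><n. \<integral>\<omega>. (\<Sum>\<tau><n. X \<sigma> \<omega> * X \<tau> \<omega>) \<partial>M)"
    by (rule Bochner_Integration.integral_sum[where f="\<lambda>\<sigma> \<omega>. \<Sum>\<tau><n. X \<sigma> \<omega> * X \<tau> \<omega>"])
       (auto intro!: Bochner_Integration.integrable_sum int)
  also have "\<dots> = (\<Sum>\<sigma><n. \<Sum>\<tau><n. \<integral>\<omega>. X \<sigma> \<omega> * X \<tau> \<omega> \<partial>M)"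
    using int by (intro sum.cong refl Bochner_Integration.integral_sum) auto
  also have "\<dots> = (\<Sum>\<sigma><n. \<Sum>\<tau>\<in>{\<sigma>}. \<integral>\<omega>. X \<sigma> \<omega> * X \<tau> \<omega> \<partial>M)"
  proof (rule sum.cong[OF refl])
    fix \<sigma> assume "\<sigma> \<in> {..<n}"
    then show "(\<Sum>\<tau><n. \<integral>\<omega>. X \<sigma> \<omega> * X \<tau> \<omega> \<partial>M) = (\<Sum>\<tau>\<in>{\<sigma>}. \<integral>\<omega>. X \<sigma> \<omega> * X \<tau> \<omega> \<partial>M)"
      using o2 by (intro sum.mono_neutral_right) auto
  qed
  also have "\<dots> = (\<Sum>\<tau><n. \<integral>\<omega>. (X \<tau> \<omega>)^2 \<partial>M)"
    by (simp add: power2_eq_square)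
  finally show ?thesis .
qed

lemma (in prob_space) chebyshev_sq:
  fixes X :: "'a \<Rightarrow> real"
  assumes "integrable M (\<lambda>\<omega>. (X \<omega>)^2)" "(\<integral>\<omega>. (X \<omega>)^2 \<partial>M) \<le> V" "0 < c"
  shows "emeasure M {\<omega>\<in>space M. c \<le> \<bar>X \<omega>\<bar>} \<le> ennreal (V / c^2)"
proof -
  have "{\<omega>\<in>space M. c \<le> \<bar>X \<omega>\<bar>} = {\<omega>\<in>space M. c^2 \<le> (X \<omega>)^2}"
    using assms(3) by (auto simp: abs_le_square_iff[symmetric] simp del: abs_le_square_iff)
  also have "emeasure M \<dots> \<le> ennreal ((1/c^2) * (\<integral>\<omega>. (X \<omega>)^2 \<partial>M))"
    using integral_Markov_inequality[OF assms(1), of "c^2"] assms(3) by simp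
  also have "\<dots> \<le> ennreal (V / c^2)"
    using assms(2,3) by (intro ennreal_leI) (simp add: divide_right_mono)
  finally show ?thesis .
qed

context qs
begin

lemma R_orth:
  assumes ab: "(a, b) \<in> pairs K" and Y: "Y \<in> borel_measurable (Filt t)"
    and Yb: "AE \<omega> in M. \<bar>Y \<omega>\<bar> \<le> B" and Fb: "\<forall>\<omega>\<in>space M. F a b t \<omega> \<le> N"
  shows "(\<integral>\<omega>. Y \<omega> * (real (R a b t \<omega>) - real (F a b t \<omega>) * q) \<partial>M) = 0"
proof -
  note Ym[measurable] = Y
  define P where "P \<omega> = max (Y \<omega>) 0" for \<omega>
  define Q where "Q \<omega> = max (- Y \<omega>) 0" for \<omega>
  have Pm: "P \<in> borel_measurable (Filt t)" unfolding P_def by measurable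
  have Qm: "Q \<in> borel_measurable (Filt t)" unfolding Q_def by measurable
  have Pb: "AE \<omega> in M. P \<omega> \<le> B" using Yb by eventually_elim (auto simp: P_def)
  have Qb: "AE \<omega> in M. Q \<omega> \<le> B" using Yb by eventually_elim (auto simp: Q_def)
  have P0: "0 \<le> P \<omega>" "0 \<le> Q \<omega>" for \<omega> by (auto simp: P_def Q_def)
  note RP = R_mean_real[OF ab Pm P0(1) Pb Fb]
  note RQ = R_mean_real[OF ab Qm P0(2) Qb Fb]
  have "(\<integral>\<omega>. Y \<omega> * (real (R a b t \<omega>) - real (F a b t \<omega>) * q) \<partial>M)
     = (\<integral>\<omega>. (P \<omega> * real (R a b t \<omega>) - P \<omega> * (real (F a b t \<omega>) * q))
          - (Q \<omega> * real (R a b t \<omega>) - Q \<omega> * (real (F a b t \<omega>) * q)) \<partial>M)"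
    by (rule Bochner_Integration.integral_cong) (auto simp: P_def Q_def max_def algebra_simps)
  also have "\<dots> = ((\<integral>\<omega>. P \<omega> * real (R a b t \<omega>) \<partial>M) - (\<integral>\<omega>. P \<omega> * (real (F a b t \<omega>) * q) \<partial>M))
      - ((\<integral>\<omega>. Q \<omega> * real (R a b t \<omega>) \<partial>M) - (\<integral>\<omega>. Q \<omega> * (real (F a b t \<omega>) * q) \<partial>M))"
    using RP RQ by simp
  also have "\<dots> = 0" using RP RQ by simp
  finally show ?thesis .
qed

end

context qs2
begin

lemma Z_bound:
  assumes ab: "(a, b) \<in> pairs K"
  shows "AE \<omega> in M. \<bar>real (R a b \<tau> \<omega>) - real (F a b \<tau> \<omega>) * q\<bar> \<le> real \<tau>"
proof -
  have abK: "a \<in> {1..K}" "b \<in> {1..K}" using pairs_sub[OF ab] by auto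
  show ?thesis using R_le_F_AE[OF ab, of \<tau>] AE_space
  proof eventually_elim
    case (elim \<omega>)
    have F: "real (F a b \<tau> \<omega>) \<le> real \<tau>" using F_le[OF elim(2) abK] by simp
    have "real (F a b \<tau> \<omega>) * q \<le> real (F a b \<tau> \<omega>)" using q by (simp add: mult_left_le)
    moreover have "real (R a b \<tau> \<omega>) \<le> real (F a b \<tau> \<omega>)" using elim(1) by simp
    moreover have "0 \<le> real (F a b \<tau> \<omega>) * q" using q by simp
    ultimately show ?case using F unfolding abs_le_iff by linarith
  qed
qed

lemma Z_meas:
  assumes ab: "(a, b) \<in> pairs K" and "\<sigma> < \<tau>"
  shows "(\<lambda>\<omega>. real (R a b \<sigma> \<omega>) - real (F a b \<sigma> \<omega>) * q) \<in> borel_measurable (Filt \<tau>)"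
proof -
  have abK: "a \<in> {1..K}" "b \<in> {1..K}" using pairs_sub[OF ab] by auto
  have r: "(\<lambda>\<omega>. real (R a b \<sigma> \<omega>)) \<in> borel_measurable (Filt \<tau>)"
    by (rule comp_count_borel[OF measR[OF abK assms(2)]])
  have f: "(\<lambda>\<omega>. real (F a b \<sigma> \<omega>) * q) \<in> borel_measurable (Filt \<tau>)"
    using assms(2) by (intro comp_count_borel[OF measF[OF abK]]) simp
  show ?thesis using borel_measurable_diff[OF r f] .
qed

lemma D_var:
  assumes ab: "(a, b) \<in> pairs K"
  shows "integrable M (\<lambda>\<omega>. (\<Sum>\<tau><t. real (R a b \<tau> \<omega>) - real (F a b \<tau> \<omega>) * q)^2)"
    "(\<integral>\<omega>. (\<Sum>\<tau><t. real (R a b \<tau> \<omega>) - real (F a b \<tau> \<omega>) * q)^2 \<partial>M) \<le> real t"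
proof -
  have abK: "a \<in> {1..K}" "b \<in> {1..K}" using pairs_sub[OF ab] by auto
  define Z where "Z \<tau> \<omega> = real (R a b \<tau> \<omega>) - real (F a b \<tau> \<omega>) * q" for \<tau> \<omega>
  have ZM: "Z \<tau> \<in> borel_measurable M" for \<tau>
    unfolding Z_def using toM[OF Z_meas[OF ab, of \<tau> "Suc \<tau>"]] by simp
  have Zb: "AE \<omega> in M. \<bar>Z \<tau> \<omega>\<bar> \<le> real t" if "\<tau> < t" for \<tau>
    using Z_bound[OF ab, of \<tau>] unfolding Z_def by eventually_elim (use that in auto)
  have orth: "(\<integral>\<omega>. Z \<sigma> \<omega> * Z \<tau> \<omega> \<partial>M) = 0" if "\<sigma> < \<tau>" "\<tau> < t" for \<sigma> \<tau>
    unfolding Z_def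
    by (rule R_orth[OF ab Z_meas[OF ab that(1)] Z_bound[OF ab, of \<sigma>]])
       (use F_le abK in auto)
  have sq: "(\<integral>\<omega>. (\<Sum>\<tau><t. Z \<tau> \<omega>)^2 \<partial>M) = (\<Sum>\<tau><t. \<integral>\<omega>. (Z \<tau> \<omega>)^2 \<partial>M)"
    by (rule sq_sum_orth[OF ZM Zb orth])
  show "integrable M (\<lambda>\<omega>. (\<Sum>\<tau><t. real (R a b \<tau> \<omega>) - real (F a b \<tau> \<omega>) * q)^2)"
  proof (rule integrable_const_bound[where B="(real t * real t)^2"])
    have "AE \<omega> in M. \<forall>\<tau>\<in>{..<t}. \<bar>Z \<tau> \<omega>\<bar> \<le> real t"
      using Zb by (subst AE_finite_all) auto
    then show "AE \<omega> in M. norm ((\<Sum>\<tau><t. real (R a b \<tau> \<omega>) - real (F a b \<tau> \<omega>) * q)^2) \<le> (real t * real t)^2"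
    proof eventually_elim
      case (elim \<omega>)
      have "\<bar>\<Sum>\<tau><t. Z \<tau> \<omega>\<bar> \<le> (\<Sum>\<tau><t. \<bar>Z \<tau> \<omega>\<bar>)" by (rule sum_abs)
      also have "\<dots> \<le> (\<Sum>\<tau><t. real t)" using elim by (intro sum_mono) auto
      finally have "\<bar>\<Sum>\<tau><t. Z \<tau> \<omega>\<bar> \<le> real t * real t" by simp
      then have "\<bar>\<Sum>\<tau><t. Z \<tau> \<omega>\<bar>^2 \<le> (real t * real t)^2"
        by (intro power_mono) auto
      then have "(\<Sum>\<tau><t. Z \<tau> \<omega>)^2 \<le> (real t * real t)^2" by simp
      then show ?case unfolding Z_def by simp
    qed
  qed (use ZM in \<open>auto simp: Z_def[symmetric]\<close>)
  have each: "(\<integral>\<omega>. (Z \<tau> \<omega>)^2 \<partial>M) \<le> (\<integral>\<omega>. real (F a b \<tau> \<omega>) \<partial>M)" for \<tau>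
  proof -
    have iZ: "integrable M (\<lambda>\<omega>. (Z \<tau> \<omega>)^2)"
    proof (rule integrable_const_bound[where B="(real \<tau>)^2"])
      show "AE \<omega> in M. norm ((Z \<tau> \<omega>)^2) \<le> (real \<tau>)^2"
        using Z_bound[OF ab, of \<tau>] unfolding Z_def
        by eventually_elim (simp add: abs_le_square_iff[symmetric] del: abs_le_square_iff)
    qed (use ZM in auto)
    have iF: "integrable M (\<lambda>\<omega>. real (F a b \<tau> \<omega>))"
    proof (rule integrable_const_bound[where B="real \<tau>"])
      show "AE \<omega> in M. norm (real (F a b \<tau> \<omega>)) \<le> real \<tau>"
        using F_le[OF _ abK] by (intro AE_I2) auto
    qed (rule comp_count_borel[OF measF_M[OF abK]])
    have iF': "integrable M (\<lambda>\<omega>. real (F a b \<tau> \<omega>) * q * (1 - q))" using iF by auto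
    have "(\<integral>\<omega>. (Z \<tau> \<omega>)^2 \<partial>M) = (\<integral>\<omega>. real (F a b \<tau> \<omega>) * q * (1 - q) \<partial>M)"
      by (rule nn_eq_to_real[OF iZ iF']) (use R_var[OF ab, of \<tau>] q in \<open>auto simp: Z_def\<close>)
    also have "\<dots> \<le> (\<integral>\<omega>. real (F a b \<tau> \<omega>) \<partial>M)"
    proof (rule integral_mono[OF iF' iF])
      fix \<omega>
      have "q * (1 - q) \<le> 1" using q by (simp add: mult_le_one)
      then have "real (F a b \<tau> \<omega>) * (q * (1 - q)) \<le> real (F a b \<tau> \<omega>) * 1"
        by (intro mult_left_mono) auto
      then show "real (F a b \<tau> \<omega>) * q * (1 - q) \<le> real (F a b \<tau> \<omega>)" by (simp add: mult.assoc)
    qed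
    finally show ?thesis .
  qed
  have iFs: "integrable M (\<lambda>\<omega>. real (F a b \<tau> \<omega>))" for \<tau>
  proof (rule integrable_const_bound[where B="real \<tau>"])
    show "AE \<omega> in M. norm (real (F a b \<tau> \<omega>)) \<le> real \<tau>"
      using F_le[OF _ abK] by (intro AE_I2) auto
  qed (rule comp_count_borel[OF measF_M[OF abK]])
  have "(\<integral>\<omega>. (\<Sum>\<tau><t. Z \<tau> \<omega>)^2 \<partial>M) \<le> (\<Sum>\<tau><t. \<integral>\<omega>. real (F a b \<tau> \<omega>) \<partial>M)"
    unfolding sq by (intro sum_mono each)
  also have "\<dots> = (\<integral>\<omega>. (\<Sum>\<tau><t. real (F a b \<tau> \<omega>)) \<partial>M)"
    using iFs by (intro Bochner_Integration.integral_sum[symmetric]) auto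
  also have "\<dots> \<le> (\<integral>\<omega>. real t \<partial>M)"
  proof (rule integral_mono_AE)
    show "integrable M (\<lambda>\<omega>. \<Sum>\<tau><t. real (F a b \<tau> \<omega>))" using iFs by auto
    show "AE \<omega> in M. (\<Sum>\<tau><t. real (F a b \<tau> \<omega>)) \<le> real t"
    proof (rule AE_I2)
      fix \<omega> assume w: "\<omega> \<in> space M"
      have "(\<Sum>\<tau><t. F a b \<tau> \<omega>) \<le> t" using Fsum_le(3)[OF w abK] .
      then show "(\<Sum>\<tau><t. real (F a b \<tau> \<omega>)) \<le> real t" by (simp flip: of_nat_sum)
    qed
  qed auto
  also have "\<dots> = real t" by (simp add: prob_space)
  finally show "(\<integral>\<omega>. (\<Sum>\<tau><t. real (R a b \<tau> \<omega>) - real (F a b \<tau> \<omega>) * q)^2 \<partial>M) \<le> real t"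
    unfolding Z_def .
qed

end


context qs2
begin

lemma C_mean:
  assumes j: "j \<in> {1..K}"
  shows "(\<integral>\<omega>. real (C j \<tau> \<omega>) \<partial>M) = p j"
proof -
  define S where "S = {\<omega>\<in>space M. C j \<tau> \<omega> = 1}"
  have S: "S \<in> sets M" unfolding S_def by (rule pred_eq_sets[OF measC_M[OF j]])
  have "(\<integral>\<omega>. real (C j \<tau> \<omega>) \<partial>M) = (\<integral>\<omega>. indicator S \<omega> \<partial>M)"
  proof (rule Bochner_Integration.integral_cong[OF refl])
    fix \<omega> assume "\<omega> \<in> space M"
    then have "C j \<tau> \<omega> \<le> 1" using C_le1 j by blast
    then show "real (C j \<tau> \<omega>) = indicator S \<omega>" using \<open>\<omega> \<in> space M\<close>
      by (cases "C j \<tau> \<omega>") (auto simp: S_def)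
  qed
  also have "\<dots> = measure M S" using S by (simp add: Int_absorb2 sets.sets_into_space)
  also have "\<dots> = p j" using C_bern j unfolding S_def by blast
  finally show ?thesis .
qed

lemma C_var:
  assumes j: "j \<in> {1..K}"
  shows "integrable M (\<lambda>\<omega>. (\<Sum>\<tau><t. real (C j \<tau> \<omega>) - p j)^2)"
    "(\<integral>\<omega>. (\<Sum>\<tau><t. real (C j \<tau> \<omega>) - p j)^2 \<partial>M) \<le> real t"
proof -
  define X where "X \<tau> \<omega> = real (C j \<tau> \<omega>) - p j" for \<tau> \<omega>
  have pj: "0 \<le> p j" "p j \<le> 1" using p j by auto
  have XM: "X \<tau> \<in> borel_measurable M" for \<tau>
    unfolding X_def by (rule comp_count_borel[OF measC_M[OF j]])
  have Xb1: "\<bar>X \<tau> \<omega>\<bar> \<le> 1" if "\<omega> \<in> space M" for \<tau> \<omega>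
  proof -
    have "C j \<tau> \<omega> \<le> 1" using C_le1 j that by blast
    then show ?thesis using pj unfolding X_def by (cases "C j \<tau> \<omega>") auto
  qed
  have Xb: "AE \<omega> in M. \<bar>X \<tau> \<omega>\<bar> \<le> 1" for \<tau> using Xb1 by (intro AE_I2) auto
  have iX: "integrable M (X \<tau>)" for \<tau>
    by (rule integrable_const_bound[where B=1]) (use Xb XM in auto)
  have iC: "integrable M (\<lambda>\<omega>. real (C j \<tau> \<omega>))" for \<tau>
  proof (rule integrable_const_bound[where B=1])
    show "AE \<omega> in M. norm (real (C j \<tau> \<omega>)) \<le> 1"
      using C_le1[OF _ j] by (intro AE_I2) auto
  qed (rule comp_count_borel[OF measC_M[OF j]])
  have EX: "(\<integral>\<omega>. X \<tau> \<omega> \<partial>M) = 0" for \<tau>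
  proof -
    have "(\<integral>\<omega>. X \<tau> \<omega> \<partial>M) = (\<integral>\<omega>. real (C j \<tau> \<omega>) \<partial>M) - (\<integral>\<omega>. p j \<partial>M)"
      unfolding X_def by (rule Bochner_Integration.integral_diff[OF iC]) simp
    then show ?thesis using C_mean[OF j, of \<tau>] by (simp add: prob_space)
  qed
  have ind: "indep_vars (\<lambda>_. borel) (\<lambda>x \<omega>. real ((\<lambda>(i, t). C i t) x \<omega>) - p (fst x)) ({1..K} \<times> UNIV)"
    by (rule indep_vars_compose2[OF C_indep, where Y="\<lambda>x n. real n - p (fst x)"]) auto
  have orth: "(\<integral>\<omega>. X \<sigma> \<omega> * X \<tau> \<omega> \<partial>M) = 0" if "\<sigma> < \<tau>" "\<tau> < t" for \<sigma> \<tau>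
  proof -
    let ?I = "{(j, \<sigma>), (j, \<tau>)}"
    have ind2: "indep_vars (\<lambda>_. borel) (\<lambda>x \<omega>. real ((\<lambda>(i, t). C i t) x \<omega>) - p (fst x)) ?I"
      by (rule indep_vars_subset[OF ind]) (use j in auto)
    have "(\<integral>\<omega>. (\<Prod>x\<in>?I. real ((\<lambda>(i, t). C i t) x \<omega>) - p (fst x)) \<partial>M)
        = (\<Prod>x\<in>?I. \<integral>\<omega>. real ((\<lambda>(i, t). C i t) x \<omega>) - p (fst x) \<partial>M)"
      by (rule indep_vars_lebesgue_integral[OF _ ind2]) (use iX[unfolded X_def] in auto)
    then have "(\<integral>\<omega>. X \<sigma> \<omega> * X \<tau> \<omega> \<partial>M) = (\<integral>\<omega>. X \<sigma> \<omega> \<partial>M) * (\<integral>\<omega>. X \<tau> \<omega> \<partial>M)"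
      using that by (simp add: X_def)
    then show ?thesis using EX by simp
  qed
  have sq: "(\<integral>\<omega>. (\<Sum>\<tau><t. X \<tau> \<omega>)^2 \<partial>M) = (\<Sum>\<tau><t. \<integral>\<omega>. (X \<tau> \<omega>)^2 \<partial>M)"
    by (rule sq_sum_orth[OF XM Xb orth])
  have each: "(\<integral>\<omega>. (X \<tau> \<omega>)^2 \<partial>M) \<le> 1" for \<tau>
  proof -
    have "(\<integral>\<omega>. (X \<tau> \<omega>)^2 \<partial>M) \<le> (\<integral>\<omega>. 1 \<partial>M)"
    proof (rule integral_mono_AE)
      show "integrable M (\<lambda>\<omega>. (X \<tau> \<omega>)^2)"
        by (rule integrable_const_bound[where B=1]) (use Xb1 XM in \<open>auto intro!: AE_I2 simp: abs_square_le_1\<close>)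
      show "AE \<omega> in M. (X \<tau> \<omega>)^2 \<le> 1" using Xb1 by (intro AE_I2) (auto simp: abs_square_le_1)
    qed auto
    then show ?thesis by (simp add: prob_space)
  qed
  show "integrable M (\<lambda>\<omega>. (\<Sum>\<tau><t. real (C j \<tau> \<omega>) - p j)^2)"
  proof (rule integrable_const_bound[where B="(real t)^2"])
    show "AE \<omega> in M. norm ((\<Sum>\<tau><t. real (C j \<tau> \<omega>) - p j)^2) \<le> (real t)^2"
    proof (rule AE_I2)
      fix \<omega> assume w: "\<omega> \<in> space M"
      have "\<bar>\<Sum>\<tau><t. X \<tau> \<omega>\<bar> \<le> (\<Sum>\<tau><t. \<bar>X \<tau> \<omega>\<bar>)" by (rule sum_abs)
      also have "\<dots> \<le> (\<Sum>\<tau><t. 1)" using Xb1[OF w] by (intro sum_mono) auto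
      finally have "\<bar>\<Sum>\<tau><t. X \<tau> \<omega>\<bar> \<le> real t" by simp
      then have "\<bar>\<Sum>\<tau><t. X \<tau> \<omega>\<bar>^2 \<le> (real t)^2" by (intro power_mono) auto
      then show "norm ((\<Sum>\<tau><t. real (C j \<tau> \<omega>) - p j)^2) \<le> (real t)^2" by (simp add: X_def)
    qed
  qed (use XM in \<open>auto simp: X_def[symmetric]\<close>)
  have "(\<integral>\<omega>. (\<Sum>\<tau><t. X \<tau> \<omega>)^2 \<partial>M) \<le> (\<Sum>\<tau><t. 1)" unfolding sq by (intro sum_mono each)
  then show "(\<integral>\<omega>. (\<Sum>\<tau><t. real (C j \<tau> \<omega>) - p j)^2 \<partial>M) \<le> real t" by (simp add: X_def)
qed

end


lemma arith_key:
  fixes I :: "nat set" and a r f l :: "nat \<Rightarrow> real" and c pj q eps t :: real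
  assumes I: "finite I" "1 \<le> card I"
    and ra: "\<And>i. i \<in> I \<Longrightarrow> r i \<le> a i"
    and fr: "\<And>i. i \<in> I \<Longrightarrow> f i * q < r i + (eps/3) * t"
    and al: "\<And>i. i \<in> I \<Longrightarrow> a i \<le> t * (l i + eps/3)"
    and q: "0 < q" "q \<le> 1"
    and lam: "(\<Sum>i\<in>I. l i + eps) \<le> q * pj"
    and cc: "t * pj - (eps/3) * t < c"
    and t: "0 \<le> t" and eps: "0 < eps"
  shows "(\<Sum>i\<in>I. a i - r i + f i) \<le> c"
proof -
  have each: "q * (a i - r i + f i) \<le> t * (l i + eps/3) + (eps/3) * t" if i: "i \<in> I" for i
  proof -
    have "q * (a i - r i + f i) = q * a i - q * r i + f i * q" by (simp add: algebra_simps)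
    also have "\<dots> \<le> q * a i - q * r i + r i + (eps/3) * t" using fr[OF i] by simp
    also have "\<dots> = q * a i + (1 - q) * r i + (eps/3) * t" by (simp add: algebra_simps)
    also have "\<dots> \<le> q * a i + (1 - q) * a i + (eps/3) * t"
      using ra[OF i] q by (simp add: mult_left_mono)
    also have "\<dots> = a i + (eps/3) * t" by (simp add: algebra_simps)
    also have "\<dots> \<le> t * (l i + eps/3) + (eps/3) * t" using al[OF i] by simp
    finally show ?thesis .
  qed
  have "q * (\<Sum>i\<in>I. a i - r i + f i) = (\<Sum>i\<in>I. q * (a i - r i + f i))"
    by (simp add: sum_distrib_left)
  also have "\<dots> \<le> (\<Sum>i\<in>I. t * (l i + eps/3) + (eps/3) * t)" by (intro sum_mono each)
  also have "\<dots> = t * ((\<Sum>i\<in>I. l i + eps) - real (card I) * (eps/3))"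
    by (simp add: sum.distrib sum_distrib_left algebra_simps)
  also have "\<dots> \<le> t * (q * pj - real (card I) * (eps/3))"
    using lam t by (intro mult_left_mono) auto
  also have "\<dots> \<le> t * (q * pj - q * (eps/3))"
  proof (intro mult_left_mono t)
    have "q * (eps/3) \<le> 1 * (eps/3)" using q eps by (intro mult_right_mono) auto
    also have "\<dots> \<le> real (card I) * (eps/3)" using I eps by (intro mult_right_mono) auto
    finally show "q * pj - real (card I) * (eps / 3) \<le> q * pj - q * (eps / 3)" by simp
  qed
  also have "\<dots> = q * (t * pj - (eps/3) * t)" by (simp add: algebra_simps)
  also have "\<dots> \<le> q * c" using cc q by (intro mult_left_mono) auto
  finally show ?thesis using q by simp
qed


context qs2
begin

lemma pair_cases: "i \<in> {1..K} \<Longrightarrow> j \<in> {1..K} \<Longrightarrow> (i, j) \<in> pairs K \<or> (j, i) \<in> pairs K"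
  by (auto simp: pairs_def)

lemma key_det:
  assumes w: "\<omega> \<in> space M" and eps: "0 < eps" and t: "1 \<le> t"
    and fL: "\<forall>j\<in>{1..K}. (\<Sum>i\<in>{1..K}. fL i j) \<le> p j"
      "\<forall>i\<in>{1..K}. \<forall>j\<in>{1..K}. lam i j + eps \<le> q * fL i j"
    and nB: "\<forall>i\<in>{1..K}. \<forall>j\<in>{1..K}. \<bar>(\<Sum>\<tau><t. real (A i j \<tau> \<omega>)) / real t - lam i j\<bar> \<le> eps/3"
    and nD: "\<forall>x\<in>pairs K. \<bar>\<Sum>\<tau><t. real (R (fst x) (snd x) \<tau> \<omega>) - real (F (fst x) (snd x) \<tau> \<omega>) * q\<bar> < eps/3 * real t"
    and nC: "\<forall>k\<in>{1..K}. \<bar>\<Sum>\<tau><t. real (C k \<tau> \<omega>) - p k\<bar> < eps/3 * real t"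
    and good: "\<forall>\<tau><t. \<forall>x\<in>pairs K. R (fst x) (snd x) \<tau> \<omega> \<le> F (fst x) (snd x) \<tau> \<omega>"
  shows "\<omega> \<in> S_event M K A R C F t"
  unfolding S_event_def
proof (intro CollectI conjI ballI w)
  fix j assume j: "j \<in> {1..K}"
  have Rle: "\<forall>\<tau><t. R i j \<tau> \<omega> \<le> F i j \<tau> \<omega>" if i: "i \<in> {1..K}" for i
    using pair_cases[OF i j]
  proof
    assume "(i, j) \<in> pairs K" then show ?thesis using good by fastforce
  next
    assume "(j, i) \<in> pairs K"
    then have "\<forall>\<tau><t. R j i \<tau> \<omega> \<le> F j i \<tau> \<omega>" using good by fastforce
    then show ?thesis using sym w i j by metis
  qed
  have DD: "\<bar>\<Sum>\<tau><t. real (R i j \<tau> \<omega>) - real (F i j \<tau> \<omega>) * q\<bar> < eps/3 * real t" if i: "i \<in> {1..K}" for i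
    using pair_cases[OF i j]
  proof
    assume "(i, j) \<in> pairs K" then show ?thesis using nD by fastforce
  next
    assume ji: "(j, i) \<in> pairs K"
    have "(\<Sum>\<tau><t. real (R i j \<tau> \<omega>) - real (F i j \<tau> \<omega>) * q) = (\<Sum>\<tau><t. real (R j i \<tau> \<omega>) - real (F j i \<tau> \<omega>) * q)"
      using sym w i j by (intro sum.cong) auto
    then show ?thesis using nD ji by fastforce
  qed
  define a where "a i = (\<Sum>\<tau><t. real (A i j \<tau> \<omega>))" for i
  define r where "r i = (\<Sum>\<tau><t. real (R i j \<tau> \<omega>))" for i
  define f where "f i = (\<Sum>\<tau><t. real (F i j \<tau> \<omega>))" for i
  define c where "c = (\<Sum>\<tau><t. real (C j \<tau> \<omega>))"
  have UE: "real (Ureq A R i j t \<omega>) = a i - r i" if i: "i \<in> {1..K}" for i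
  proof -
    have "Ureq A R i j t \<omega> + (\<Sum>\<tau><t. R i j \<tau> \<omega>) = (\<Sum>\<tau><t. A i j \<tau> \<omega>)"
      using UE_good[OF w i j Rle[OF i]] by blast
    then have "real (Ureq A R i j t \<omega>) + real (\<Sum>\<tau><t. R i j \<tau> \<omega>) = real (\<Sum>\<tau><t. A i j \<tau> \<omega>)"
      by (metis of_nat_add)
    then show ?thesis unfolding a_def r_def by simp
  qed
  have E0e: "real (E0 C F K j t \<omega>) = c - (\<Sum>i\<in>{1..K}. f i)"
  proof -
    have "E0 C F K j t \<omega> + (\<Sum>\<tau><t. \<Sum>i\<in>{1..K}. F i j \<tau> \<omega>) = (\<Sum>\<tau><t. C j \<tau> \<omega>)"
      using E0_sum[OF w j] .
    then have "real (E0 C F K j t \<omega>) + real (\<Sum>\<tau><t. \<Sum>i\<in>{1..K}. F i j \<tau> \<omega>) = real (\<Sum>\<tau><t. C j \<tau> \<omega>)"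
      by (metis of_nat_add)
    moreover have "(\<Sum>\<tau><t. \<Sum>i\<in>{1..K}. real (F i j \<tau> \<omega>)) = (\<Sum>i\<in>{1..K}. \<Sum>\<tau><t. real (F i j \<tau> \<omega>))"
      by (rule sum.swap)
    ultimately show ?thesis unfolding c_def f_def by simp
  qed
  have card: "1 \<le> card {1..K}" using j by auto
  have tpos: "0 < real t" using t by simp
  have key: "(\<Sum>i\<in>{1..K}. a i - r i + f i) \<le> c"
  proof (rule arith_key[where q=q and l="\<lambda>i. lam i j" and pj="p j" and eps=eps and t="real t"])
    show "finite {1..K}" by simp
    show "1 \<le> card {1..K}" by (rule card)
    show "r i \<le> a i" if i: "i \<in> {1..K}" for i
      using UE[OF i] unfolding a_def r_def by simp
    show "f i * q < r i + eps / 3 * real t" if i: "i \<in> {1..K}" for i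
    proof -
      have "(\<Sum>\<tau><t. real (R i j \<tau> \<omega>) - real (F i j \<tau> \<omega>) * q) = r i - f i * q"
        unfolding r_def f_def by (simp add: sum_subtractf sum_distrib_right)
      then have "\<bar>r i - f i * q\<bar> < eps / 3 * real t" using DD[OF i] by simp
      then show ?thesis unfolding abs_less_iff by linarith
    qed
    show "a i \<le> real t * (lam i j + eps / 3)" if i: "i \<in> {1..K}" for i
    proof -
      have "\<bar>a i / real t - lam i j\<bar> \<le> eps / 3" using nB i j unfolding a_def by blast
      then have "a i / real t - lam i j \<le> eps / 3" by linarith
      then have "a i / real t \<le> lam i j + eps / 3" by linarith
      then show ?thesis using tpos by (simp add: divide_le_eq mult.commute)
    qed
    show "0 < q" "q \<le> 1" using q by auto
    show "(\<Sum>i\<in>{1..K}. lam i j + eps) \<le> q * p j"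
    proof -
      have "(\<Sum>i\<in>{1..K}. lam i j + eps) \<le> (\<Sum>i\<in>{1..K}. q * fL i j)"
        using fL(2) j by (intro sum_mono) auto
      also have "\<dots> = q * (\<Sum>i\<in>{1..K}. fL i j)" by (simp add: sum_distrib_left)
      also have "\<dots> \<le> q * p j" using fL(1) j q by (intro mult_left_mono) auto
      finally show ?thesis .
    qed
    show "real t * p j - eps / 3 * real t < c"
    proof -
      have "(\<Sum>\<tau><t. real (C j \<tau> \<omega>) - p j) = c - real t * p j"
        unfolding c_def by (simp add: sum_subtractf)
      moreover have "\<bar>\<Sum>\<tau><t. real (C j \<tau> \<omega>) - p j\<bar> < eps/3 * real t" using nC j by blast
      ultimately have "\<bar>c - real t * p j\<bar> < eps/3 * real t" by simp
      then show ?thesis unfolding abs_less_iff by linarith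
    qed
    show "0 \<le> real t" by simp
    show "0 < eps" by (rule eps)
  qed
  have "real (\<Sum>i\<in>{1..K}. Ureq A R i j t \<omega>) = (\<Sum>i\<in>{1..K}. a i - r i)"
    using UE by simp
  also have "\<dots> \<le> c - (\<Sum>i\<in>{1..K}. f i)" using key by (simp add: sum.distrib sum_subtractf)
  also have "\<dots> = real (E0 C F K j t \<omega>)" using E0e by simp
  finally show "(\<Sum>i\<in>{1..K}. Ureq A R i j t \<omega>) \<le> E0 C F K j t \<omega>" by linarith
qed

end


lemma sets_gt: fixes h :: "'a \<Rightarrow> real" shows "h \<in> borel_measurable M \<Longrightarrow> {\<omega>\<in>space M. c < h \<omega>} \<in> sets M"
  by measurable
lemma sets_ge: fixes h :: "'a \<Rightarrow> real" shows "h \<in> borel_measurable M \<Longrightarrow> {\<omega>\<in>space M. c \<le> h \<omega>} \<in> sets M"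
  by measurable

context qs2
begin

lemma sumA_meas: "i \<in> {1..K} \<Longrightarrow> j \<in> {1..K} \<Longrightarrow> (\<lambda>\<omega>. \<Sum>\<tau><t. real (A i j \<tau> \<omega>)) \<in> borel_measurable M"
  by (intro borel_measurable_sum comp_count_borel measA_M)

lemma B1_sets: "B1 M K A lam t e \<in> sets M"
  unfolding B1_def
proof (intro sets.sets_Collect_finite_Ex finite_atLeastAtMost)
  fix i j assume i: "i \<in> {1..K}" and j: "j \<in> {1..K}"
  show "{\<omega>\<in>space M. e < \<bar>(\<Sum>\<tau><t. real (A i j \<tau> \<omega>)) / real t - lam i j\<bar>} \<in> sets M"
    by (intro sets_gt borel_measurable_abs borel_measurable_diff borel_measurable_divide sumA_meas[OF i j]) auto
qed

lemma bad_bound: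
  assumes e: "0 < e" and t: "1 \<le> t"
  shows "emeasure M ((\<Union>x\<in>pairs K. {\<omega>\<in>space M. e * real t \<le> \<bar>\<Sum>\<tau><t. real (R (fst x) (snd x) \<tau> \<omega>) - real (F (fst x) (snd x) \<tau> \<omega>) * q\<bar>})
      \<union> (\<Union>k\<in>{1..K}. {\<omega>\<in>space M. e * real t \<le> \<bar>\<Sum>\<tau><t. real (C k \<tau> \<omega>) - p k\<bar>}))
    \<le> ennreal (real (K * K + K) / (e^2 * real t))"
    (is "emeasure M ((\<Union>x\<in>pairs K. ?D x) \<union> (\<Union>k\<in>{1..K}. ?C k)) \<le> _")
proof -
  define v where "v = real t / (e * real t)^2"
  have tpos: "0 < real t" using t by simp
  have v: "v = 1 / (e^2 * real t)" unfolding v_def using tpos e by (simp add: power2_eq_square field_simps)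
  have v0: "0 \<le> v" unfolding v_def by simp
  have Dm: "?D x \<in> sets M" if x: "x \<in> pairs K" for x
    using pairs_sub[OF x]
    by (intro sets_ge borel_measurable_abs borel_measurable_sum borel_measurable_diff borel_measurable_times
        comp_count_borel measR_M measF_M borel_measurable_const) auto
  have Cm: "?C k \<in> sets M" if k: "k \<in> {1..K}" for k
    using k by (intro sets_ge borel_measurable_abs borel_measurable_sum borel_measurable_diff
        comp_count_borel measC_M borel_measurable_const) auto
  have Dle: "emeasure M (?D x) \<le> ennreal v" if x: "x \<in> pairs K" for x
  proof -
    have x': "(fst x, snd x) \<in> pairs K" using x by simp
    show ?thesis unfolding v_def
      by (rule chebyshev_sq[OF D_var(1)[OF x'] D_var(2)[OF x']]) (use e tpos in simp)
  qed
  have Cle: "emeasure M (?C k) \<le> ennreal v" if k: "k \<in> {1..K}" for k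
    unfolding v_def by (rule chebyshev_sq[OF C_var(1)[OF k] C_var(2)[OF k]]) (use e tpos in simp)
  have cardP: "card (pairs K) \<le> K * K"
  proof -
    have "card (pairs K) \<le> card ({1..K} \<times> {1..K})"
      by (rule card_mono) (auto simp: pairs_def)
    then show ?thesis by (simp add: card_cartesian_product)
  qed
  have "emeasure M ((\<Union>x\<in>pairs K. ?D x) \<union> (\<Union>k\<in>{1..K}. ?C k))
      \<le> emeasure M (\<Union>x\<in>pairs K. ?D x) + emeasure M (\<Union>k\<in>{1..K}. ?C k)"
    using Dm Cm finite_pairs by (intro emeasure_subadditive) auto
  also have "\<dots> \<le> (\<Sum>x\<in>pairs K. emeasure M (?D x)) + (\<Sum>k\<in>{1..K}. emeasure M (?C k))"
    using Dm Cm finite_pairs by (intro add_mono emeasure_subadditive_finite) auto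
  also have "\<dots> \<le> (\<Sum>x\<in>pairs K. ennreal v) + (\<Sum>k\<in>{1..K}. ennreal v)"
    using Dle Cle by (intro add_mono sum_mono) auto
  also have "\<dots> = ennreal (real (card (pairs K)) * v + real K * v)"
    using v0 by (simp add: ennreal_plus ennreal_mult ennreal_of_nat_eq_real_of_nat)
  also have "\<dots> \<le> ennreal (real (K * K + K) * v)"
  proof (intro ennreal_leI)
    have "real (card (pairs K)) \<le> real (K * K)" using cardP by linarith
    then have "real (card (pairs K)) * v \<le> real (K * K) * v" using v0 by (rule mult_right_mono)
    then show "real (card (pairs K)) * v + real K * v \<le> real (K * K + K) * v"
      by (simp add: algebra_simps)
  qed
  also have "real (K * K + K) * v = real (K * K + K) / (e^2 * real t)" unfolding v by simp
  finally show ?thesis .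
qed

end


context qs2
begin

lemma main:
  fixes lam :: "nat \<Rightarrow> nat \<Rightarrow> real" and eps :: real
  assumes eps: "eps > 0" and Lam: "in_Lambda K p q (\<lambda>i j. lam i j + eps)"
    and assm1: "\<forall>e' > 0. \<exists>c1. \<forall>t \<ge> 1. \<forall>i\<in>{1..K}. \<forall>j\<in>{1..K}.
        (\<integral>\<^sup>+\<omega>\<in>B1 M K A lam t e'. ennreal (\<Sum>\<tau><t. real (A i j \<tau> \<omega>)) \<partial>M) \<le> ennreal c1"
  shows "\<exists>c2. \<forall>t \<ge> 1. \<forall>i\<in>{1..K}. \<forall>j\<in>{1..K}.
    (\<integral>\<^sup>+\<omega>\<in>(space M - S_event M K A R C F t). ennreal (\<Sum>\<tau><t. real (A i j \<tau> \<omega>)) \<partial>M)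
      \<le> ennreal c2"
proof -
  define e where "e = eps / 3"
  have e: "0 < e" using eps unfolding e_def by simp
  obtain c1 where c1: "\<forall>t \<ge> 1. \<forall>i\<in>{1..K}. \<forall>j\<in>{1..K}.
        (\<integral>\<^sup>+\<omega>\<in>B1 M K A lam t e. ennreal (\<Sum>\<tau><t. real (A i j \<tau> \<omega>)) \<partial>M) \<le> ennreal c1"
    using assm1 e by blast
  obtain fL where fL: "\<forall>j\<in>{1..K}. (\<Sum>i\<in>{1..K}. fL i j) \<le> p j"
      "\<forall>i\<in>{1..K}. \<forall>j\<in>{1..K}. lam i j + eps \<le> q * fL i j"
    using Lam unfolding in_Lambda_def by blast
  define L where "L = (\<Sum>i\<in>{1..K}. \<Sum>j\<in>{1..K}. \<bar>lam i j\<bar>)"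
  have L0: "0 \<le> L" unfolding L_def by (intro sum_nonneg) auto
  have lamL: "lam i j \<le> L" if ij: "i \<in> {1..K}" "j \<in> {1..K}" for i j
  proof -
    have "lam i j \<le> \<bar>lam i j\<bar>" by simp
    also have "\<dots> \<le> (\<Sum>j\<in>{1..K}. \<bar>lam i j\<bar>)" using ij by (intro member_le_sum) auto
    also have "\<dots> \<le> L" unfolding L_def using ij
      by (intro member_le_sum[of i _ "\<lambda>i. \<Sum>j\<in>{1..K}. \<bar>lam i j\<bar>"]) (auto intro: sum_nonneg)
    finally show ?thesis .
  qed
  define c2 where "c2 = max c1 0 + (L + e) * (real (K * K + K) / e^2)"
  show ?thesis
  proof (intro exI[of _ c2] allI impI ballI)
    fix t i j :: nat assume t: "1 \<le> t" and i: "i \<in> {1..K}" and j: "j \<in> {1..K}"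
    have tpos: "0 < real t" using t by simp
    define B where "B = B1 M K A lam t e"
    define Bad where "Bad = (\<Union>x\<in>pairs K. {\<omega>\<in>space M. e * real t \<le> \<bar>\<Sum>\<tau><t. real (R (fst x) (snd x) \<tau> \<omega>) - real (F (fst x) (snd x) \<tau> \<omega>) * q\<bar>})
      \<union> (\<Union>k\<in>{1..K}. {\<omega>\<in>space M. e * real t \<le> \<bar>\<Sum>\<tau><t. real (C k \<tau> \<omega>) - p k\<bar>})"
    define Sb where "Sb = space M - S_event M K A R C F t"
    define fA where "fA \<omega> = ennreal (\<Sum>\<tau><t. real (A i j \<tau> \<omega>))" for \<omega>
    define cst where "cst = real t * (L + e)"
    have BM: "B \<in> sets M" unfolding B_def by (rule B1_sets)
    have Dm: "{\<omega>\<in>space M. e * real t \<le> \<bar>\<Sum>\<tau><t. real (R (fst x) (snd x) \<tau> \<omega>) - real (F (fst x) (snd x) \<tau> \<omega>) * q\<bar>} \<in> sets M"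
      if x: "x \<in> pairs K" for x
      using pairs_sub[OF x]
      by (intro sets_ge borel_measurable_abs borel_measurable_sum borel_measurable_diff borel_measurable_times
          comp_count_borel measR_M measF_M borel_measurable_const) auto
    have Cm: "{\<omega>\<in>space M. e * real t \<le> \<bar>\<Sum>\<tau><t. real (C k \<tau> \<omega>) - p k\<bar>} \<in> sets M" if k: "k \<in> {1..K}" for k
      using k by (intro sets_ge borel_measurable_abs borel_measurable_sum borel_measurable_diff
          comp_count_borel measC_M borel_measurable_const) auto
    have BadM: "Bad \<in> sets M" unfolding Bad_def using Dm Cm finite_pairs
      by (intro sets.Un sets.finite_UN) auto
    note [measurable] = sumA_meas[OF i j]
    have fAM: "fA \<in> borel_measurable M" unfolding fA_def by measurable
    have AEgood: "AE \<omega> in M. \<forall>\<tau>\<in>{..<t}. \<forall>x\<in>pairs K. R (fst x) (snd x) \<tau> \<omega> \<le> F (fst x) (snd x) \<tau> \<omega>"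
    proof (subst AE_finite_all, simp, intro ballI)
      fix \<tau>
      show "AE \<omega> in M. \<forall>x\<in>pairs K. R (fst x) (snd x) \<tau> \<omega> \<le> F (fst x) (snd x) \<tau> \<omega>"
      proof (subst AE_finite_all[OF finite_pairs], intro ballI)
        fix x assume "x \<in> pairs K"
        then show "AE \<omega> in M. R (fst x) (snd x) \<tau> \<omega> \<le> F (fst x) (snd x) \<tau> \<omega>"
          using R_le_F_AE[of "fst x" "snd x" \<tau>] by simp
      qed
    qed
    have pw: "AE \<omega> in M. fA \<omega> * indicator Sb \<omega> \<le> fA \<omega> * indicator B \<omega> + ennreal cst * indicator Bad \<omega>"
      using AEgood AE_space
    proof eventually_elim
      case (elim \<omega>)
      show ?case
      proof (cases "\<omega> \<in> Sb")
        case False then show ?thesis by simp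
      next
        case inS: True
        show ?thesis
        proof (cases "\<omega> \<in> B")
          case True then show ?thesis using inS by simp
        next
          case nB: False
          have nB': "\<forall>i'\<in>{1..K}. \<forall>j'\<in>{1..K}. \<bar>(\<Sum>\<tau><t. real (A i' j' \<tau> \<omega>)) / real t - lam i' j'\<bar> \<le> eps/3"
            using nB elim(2) unfolding B_def B1_def e_def by (auto simp: not_less)
          have "\<omega> \<in> Bad"
          proof (rule ccontr)
            assume nBad: "\<omega> \<notin> Bad"
            have nD: "\<forall>x\<in>pairs K. \<bar>\<Sum>\<tau><t. real (R (fst x) (snd x) \<tau> \<omega>) - real (F (fst x) (snd x) \<tau> \<omega>) * q\<bar> < eps/3 * real t"
              using nBad elim(2) unfolding Bad_def e_def by (auto simp: not_le)
            have nC: "\<forall>k\<in>{1..K}. \<bar>\<Sum>\<tau><t. real (C k \<tau> \<omega>) - p k\<bar> < eps/3 * real t"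
              using nBad elim(2) unfolding Bad_def e_def by (auto simp: not_le)
            have "\<omega> \<in> S_event M K A R C F t"
              by (rule key_det[OF elim(2) eps t fL nB' nD nC]) (use elim(1) in auto)
            then show False using inS unfolding Sb_def by simp
          qed
          moreover have "fA \<omega> \<le> ennreal cst"
          proof -
            have "\<bar>(\<Sum>\<tau><t. real (A i j \<tau> \<omega>)) / real t - lam i j\<bar> \<le> e" using nB' i j unfolding e_def by blast
            then have "(\<Sum>\<tau><t. real (A i j \<tau> \<omega>)) / real t \<le> lam i j + e" by linarith
            then have "(\<Sum>\<tau><t. real (A i j \<tau> \<omega>)) \<le> real t * (lam i j + e)"
              using tpos by (simp add: divide_le_eq mult.commute)
            also have "\<dots> \<le> real t * (L + e)" using lamL[OF i j] tpos by simp
            finally show ?thesis unfolding fA_def cst_def by (rule ennreal_leI)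
          qed
          ultimately show ?thesis using inS nB by (simp add: add_increasing)
        qed
      qed
    qed
    have "(\<integral>\<^sup>+\<omega>\<in>Sb. fA \<omega> \<partial>M) \<le> (\<integral>\<^sup>+\<omega>. fA \<omega> * indicator B \<omega> + ennreal cst * indicator Bad \<omega> \<partial>M)"
      by (rule nn_integral_mono_AE[OF pw])
    also have "\<dots> = (\<integral>\<^sup>+\<omega>\<in>B. fA \<omega> \<partial>M) + ennreal cst * emeasure M Bad"
      using fAM BM BadM by (simp add: nn_integral_add nn_integral_cmult_indicator)
    also have "\<dots> \<le> ennreal c1 + ennreal cst * ennreal (real (K * K + K) / (e^2 * real t))"
    proof (intro add_mono mult_left_mono)
      show "(\<integral>\<^sup>+\<omega>\<in>B. fA \<omega> \<partial>M) \<le> ennreal c1" using c1 t i j unfolding B_def fA_def by blast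
      show "emeasure M Bad \<le> ennreal (real (K * K + K) / (e^2 * real t))"
        unfolding Bad_def by (rule bad_bound[OF e t])
    qed simp
    also have "\<dots> \<le> ennreal c2"
    proof -
      have "ennreal cst * ennreal (real (K * K + K) / (e^2 * real t)) = ennreal ((L + e) * (real (K * K + K) / e^2))"
      proof -
        have "cst * (real (K * K + K) / (e^2 * real t)) = (L + e) * (real (K * K + K) / e^2)"
          unfolding cst_def using tpos e by (simp add: field_simps power2_eq_square)
        then show ?thesis using L0 e tpos unfolding cst_def by (simp add: ennreal_mult[symmetric])
      qed
      moreover have "ennreal c1 \<le> ennreal (max c1 0)" by (intro ennreal_leI) simp
      ultimately have "ennreal c1 + ennreal cst * ennreal (real (K * K + K) / (e^2 * real t))
          \<le> ennreal (max c1 0) + ennreal ((L + e) * (real (K * K + K) / e^2))" by simp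
      also have "\<dots> = ennreal c2" unfolding c2_def using L0 e by (simp add: ennreal_plus)
      finally show ?thesis .
    qed
    finally show "(\<integral>\<^sup>+\<omega>\<in>(space M - S_event M K A R C F t). ennreal (\<Sum>\<tau><t. real (A i j \<tau> \<omega>)) \<partial>M) \<le> ennreal c2"
      unfolding Sb_def fA_def .
  qed
qed

end

theorem lemma4:
  fixes M :: "'a measure" and K :: nat and p :: "nat \<Rightarrow> real" and q eps Amax :: real
    and lam :: "nat \<Rightarrow> nat \<Rightarrow> real"
    and C :: "nat \<Rightarrow> nat \<Rightarrow> 'a \<Rightarrow> nat" and A F R :: "'a pproc"
    and Filt :: "nat \<Rightarrow> 'a measure"
  assumes prob: "prob_space M"
    and q: "0 < q" "q \<le> 1"
    and p: "\<forall>i\<in>{1..K}. 0 \<le> p i \<and> p i \<le> 1"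
    \<comment> \<open>filtration: information available at the start of slot t\<close>
    and filt_sub: "\<forall>t. subalgebra M (Filt t)"
    and filt_mono: "\<forall>s t. s \<le> t \<longrightarrow> sets (Filt s) \<subseteq> sets (Filt t)"
    and adapt: "\<forall>t. \<forall>i\<in>{1..K}. \<forall>j\<in>{1..K}.
        A i j t \<in> measurable (Filt (Suc t)) (count_space UNIV) \<and>
        R i j t \<in> measurable (Filt (Suc t)) (count_space UNIV) \<and>
        F i j t \<in> measurable (Filt t) (count_space UNIV)"
    and adaptC: "\<forall>t. \<forall>i\<in>{1..K}. C i t \<in> measurable (Filt (Suc t)) (count_space UNIV)"
    \<comment> \<open>symmetry of pair-indexed quantities\<close>
    and sym: "\<forall>t. \<forall>i\<in>{1..K}. \<forall>j\<in>{1..K}. \<forall>\<omega>\<in>space M.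
        A i j t \<omega> = A j i t \<omega> \<and> R i j t \<omega> = R j i t \<omega> \<and> F i j t \<omega> = F j i t \<omega>"
    \<comment> \<open>(i) generation: mutually independent Bernoulli(p_i) variables, i.i.d. in t\<close>
    and C_indep: "prob_space.indep_vars M (\<lambda>_. count_space UNIV) (\<lambda>(i, t). C i t) ({1..K} \<times> UNIV)"
    and C_bern: "\<forall>i\<in>{1..K}. \<forall>t. (\<forall>\<omega>\<in>space M. C i t \<omega> \<le> 1) \<and>
        measure M {\<omega>\<in>space M. C i t \<omega> = 1} = p i"
    \<comment> \<open>(ii) swaps: given the past, successes are independent Binomial(F_ij(t), q) over pairs\<close>
    and R_law: "\<forall>t. \<forall>B\<in>sets (Filt t). \<forall>r :: nat \<Rightarrow> nat \<Rightarrow> nat.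
        emeasure M (B \<inter> {\<omega>\<in>space M. \<forall>(i, j)\<in>pairs K. R i j t \<omega> = r i j}) =
        (\<integral>\<^sup>+\<omega>\<in>B. (\<Prod>(i, j)\<in>pairs K. ennreal (pmf (binomial_pmf (F i j t \<omega>) q) (r i j))) \<partial>M)"
    \<comment> \<open>(iii) requests\<close>
    and A_indep: "prob_space.indep_vars M (\<lambda>_. seq_space) (\<lambda>(i, j) \<omega> t. A i j t \<omega>) (pairs K)"
    and A_stat: "\<forall>(i, j)\<in>pairs K. stationary_proc M (\<lambda>t. A i j t) \<and> ergodic_proc M (\<lambda>t. A i j t)"
    and A_rate: "\<forall>i\<in>{1..K}. \<forall>j\<in>{1..K}. 0 \<le> lam i j \<and>
        (\<integral>\<^sup>+\<omega>. ennreal (real (A i j 0 \<omega>)) \<partial>M) = ennreal (lam i j)"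
    and A_mom: "\<forall>t. \<forall>i\<in>{1..K}. \<forall>j\<in>{1..K}. \<forall>h.
        (\<integral>\<^sup>+\<omega>\<in>{\<omega>\<in>space M. hist K A R C t \<omega> = h}. ennreal ((real (A i j t \<omega>))\<^sup>2) \<partial>M)
          \<le> ennreal (Amax\<^sup>2) * emeasure M {\<omega>\<in>space M. hist K A R C t \<omega> = h}"
    \<comment> \<open>rates with slack in the capacity region\<close>
    and eps: "eps > 0"
    and Lam: "in_Lambda K p q (\<lambda>i j. lam i j + eps)"
    \<comment> \<open>Assumption 1\<close>
    and assm1: "\<forall>e' > 0. \<exists>c1. \<forall>t \<ge> 1. \<forall>i\<in>{1..K}. \<forall>j\<in>{1..K}.
        (\<integral>\<^sup>+\<omega>\<in>B1 M K A lam t e'. ennreal (\<Sum>\<tau><t. real (A i j \<tau> \<omega>)) \<partial>M) \<le> ennreal c1"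
    \<comment> \<open>on-demand protocol\<close>
    and ondemand: "\<forall>t. \<forall>\<omega>\<in>space M.
        on_demand K (\<lambda>j. E0 C F K j t \<omega>) (\<lambda>i j. Ureq A R i j t \<omega>) (\<lambda>i j. F i j t \<omega>)"
  shows "\<exists>c2. \<forall>t \<ge> 1. \<forall>i\<in>{1..K}. \<forall>j\<in>{1..K}.
    (\<integral>\<^sup>+\<omega>\<in>(space M - S_event M K A R C F t). ennreal (\<Sum>\<tau><t. real (A i j \<tau> \<omega>)) \<partial>M)
      \<le> ennreal c2"
  proof -
  interpret qs2 M K p q C A F R Filt
    by (rule qs2.intro[OF qs.intro qs2_axioms.intro])
       (fact prob q filt_sub filt_mono adapt adaptC R_law p sym C_indep C_bern ondemand)+
  show ?thesis by (rule main[OF eps Lam assm1])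
qed

end
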